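(* Let $n\ge2$ and let $\gamma:I\to\mathbb{R}^2$ be a $C^\infty$ curve with $0\in I$. Then $\gamma'(0)=\cdots=\gamma^{(n-1)}(0)=\mathbf{0}$ and $\det(\gamma^{(n)}(0),\gamma^{(n+1)}(0))\neq0$ if and only if $\gamma$ is $\mathcal{A}$-equivalent at $t=0$ to a curve $\gamma_0(t)=(t^n,t^{n+1})+h(t)$, where $h$ is an $\mathbb{R}^2$-valued $C^\infty$ function with $h(0)=h'(0)=\cdots=h^{(n+2)}(0)=\mathbf{0}$.
   Context: $\mathcal{A}$-equivalence of curve germs: existence of $C^\infty$ diffeomorphism germs $\psi$ of $(\mathbb{R},0)$ and $\Psi$ of $\mathbb{R}^2$ with $\Psi\circ\gamma_1\circ\psi^{-1}=\gamma_2$. *)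

theory Defs
  imports "HOL-Analysis.Analysis"
begin

fun dderivs :: "'a::real_normed_vector list \<Rightarrow> ('a \<Rightarrow> 'b::real_normed_vector) \<Rightarrow> 'a \<Rightarrow> 'b" where
  "dderivs [] f = f"
| "dderivs (v # vs) f = (\<lambda>x. frechet_derivative (dderivs vs f) (at x) v)"

definition smooth_on :: "'a::real_normed_vector set \<Rightarrow> ('a \<Rightarrow> 'b::real_normed_vector) \<Rightarrow> bool" where
  "smooth_on U f \<longleftrightarrow> open U \<and> (\<forall>vs. \<forall>x\<in>U. dderivs vs f differentiable (at x))"

definition nderiv :: "nat \<Rightarrow> (real \<Rightarrow> 'b::real_normed_vector) \<Rightarrow> real \<Rightarrow> 'b" where
  "nderiv k f = ((\<lambda>g t. vector_derivative g (at t)) ^^ k) f"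

definition det2 :: "real \<times> real \<Rightarrow> real \<times> real \<Rightarrow> real" where
  "det2 a b = fst a * snd b - snd a * fst b"

definition diffeo_germ :: "('a::real_normed_vector \<Rightarrow> 'a) \<Rightarrow> 'a \<Rightarrow> 'a \<Rightarrow> bool" where
  "diffeo_germ f p q \<longleftrightarrow> (\<exists>U V g. p \<in> U \<and> f p = q \<and> smooth_on U f \<and> smooth_on V g \<and>
      f ` U = V \<and> (\<forall>x\<in>U. g (f x) = x) \<and> (\<forall>y\<in>V. f (g y) = y))"

text \<open>A-equivalence of curve germs at t = 0: Psi o gamma1 o psi^{-1} = gamma2 as germs,
  written equivalently as Psi o gamma1 = gamma2 o psi near 0.\<close>
definition A_equiv_at0 :: "(real \<Rightarrow> real \<times> real) \<Rightarrow> (real \<Rightarrow> real \<times> real) \<Rightarrow> bool" where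
  "A_equiv_at0 \<gamma>1 \<gamma>2 \<longleftrightarrow> (\<exists>\<psi> \<Psi> W. diffeo_germ \<psi> 0 0 \<and> diffeo_germ \<Psi> (\<gamma>1 0) (\<gamma>2 0) \<and>
      open W \<and> 0 \<in> W \<and> (\<forall>s\<in>W. \<Psi> (\<gamma>1 s) = \<gamma>2 (\<psi> s)))"

end

theory Submission
  imports Defs
begin

definition d1 :: "(real \<Rightarrow> 'b::real_normed_vector) \<Rightarrow> real \<Rightarrow> 'b" where
  "d1 f = (\<lambda>t. vector_derivative f (at t))"

lemma nderiv_0[simp]: "nderiv 0 f = f"
  by (simp add: nderiv_def)

lemma nderiv_Suc: "nderiv (Suc k) f = nderiv k (d1 f)"
  unfolding nderiv_def d1_def by (simp add: funpow_Suc_right del: funpow.simps)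

lemma nderiv_Suc': "nderiv (Suc k) f = d1 (nderiv k f)"
  unfolding nderiv_def d1_def by simp

lemma d1_works: "f differentiable (at x) \<Longrightarrow> (f has_vector_derivative d1 f x) (at x)"
  unfolding d1_def using vector_derivative_works by blast

lemma d1_eq: "(f has_vector_derivative f') (at x) \<Longrightarrow> d1 f x = f'"
  unfolding d1_def by (simp add: vector_derivative_at)

lemma d1_local:
  assumes "open U" "x \<in> U" "\<And>y. y \<in> U \<Longrightarrow> f y = g y"
  shows "d1 f x = d1 g x"
proof -
  have "(f has_vector_derivative f') (at x) \<longleftrightarrow> (g has_vector_derivative f') (at x)" for f'
    using assms has_vector_derivative_transform_within_open[of _ _ x U] by metis
  then show ?thesis unfolding d1_def vector_derivative_def by simp
qed

lemma nderiv_local: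
  assumes "open U" "\<And>y. y \<in> U \<Longrightarrow> f y = g y" "x \<in> U"
  shows "nderiv j f x = nderiv j g x"
  using assms(3)
proof (induction j arbitrary: x)
  case 0 then show ?case using assms by simp
next
  case (Suc j)
  then show ?case unfolding nderiv_Suc' by (intro d1_local[OF assms(1)]) auto
qed

lemma differentiable_local:
  assumes "open U" "x \<in> U" "\<And>y. y \<in> U \<Longrightarrow> f y = g y" "f differentiable (at x)"
  shows "g differentiable (at x)"
proof -
  obtain D where "(f has_derivative D) (at x)" using assms(4) unfolding differentiable_def by blast
  then have "(g has_derivative D) (at x)"
    using has_derivative_transform_within_open[OF _ assms(1,2)] assms(3) by blast
  then show ?thesis unfolding differentiable_def by blast
qed

definition Ck :: "nat \<Rightarrow> real set \<Rightarrow> (real \<Rightarrow> 'b::real_normed_vector) \<Rightarrow> bool" where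
  "Ck k U f \<longleftrightarrow> (\<forall>j<k. \<forall>x\<in>U. nderiv j f differentiable (at x))"

lemma Ck_0[simp]: "Ck 0 U f" by (simp add: Ck_def)

lemma Ck_Suc: "Ck (Suc k) U f \<longleftrightarrow> (\<forall>x\<in>U. f differentiable (at x)) \<and> Ck k U (d1 f)"
proof
  assume "Ck (Suc k) U f"
  then show "(\<forall>x\<in>U. f differentiable (at x)) \<and> Ck k U (d1 f)"
    unfolding Ck_def by (metis Suc_mono nderiv_0 nderiv_Suc zero_less_Suc)
next
  assume a: "(\<forall>x\<in>U. f differentiable (at x)) \<and> Ck k U (d1 f)"
  show "Ck (Suc k) U f" unfolding Ck_def
  proof (intro allI impI)
    fix j assume "j < Suc k"
    then show "\<forall>x\<in>U. nderiv j f differentiable (at x)"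
      using a unfolding Ck_def by (cases j) (auto simp: nderiv_Suc)
  qed
qed

lemma Ck_mono: "Ck m U f \<Longrightarrow> k \<le> m \<Longrightarrow> Ck k U f"
  unfolding Ck_def by auto

lemma Ck_local:
  assumes "open U" "\<And>y. y \<in> U \<Longrightarrow> f y = g y" "Ck k U f"
  shows "Ck k U g"
  unfolding Ck_def
proof (intro allI impI ballI)
  fix j x assume "j < k" "x \<in> U"
  have "nderiv j f differentiable (at x)" using assms(3) \<open>j<k\<close> \<open>x\<in>U\<close> unfolding Ck_def by blast
  moreover have "\<And>y. y\<in>U \<Longrightarrow> nderiv j f y = nderiv j g y"
    by (rule nderiv_local[OF assms(1)]) (auto simp: assms(2))
  ultimately show "nderiv j g differentiable (at x)"
    using differentiable_local[OF assms(1) \<open>x\<in>U\<close>, of "nderiv j f" "nderiv j g"] by blast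
qed

lemma Ck_add:
  assumes "open U" "Ck k U f" "Ck k U g"
  shows "Ck k U (\<lambda>x. f x + g x) \<and> (\<forall>j\<le>k. \<forall>x\<in>U. nderiv j (\<lambda>x. f x + g x) x = nderiv j f x + nderiv j g x)"
  using assms(2,3)
proof (induction k arbitrary: f g)
  case 0 then show ?case by simp
next
  case (Suc k)
  have df: "\<forall>x\<in>U. f differentiable (at x)" and dg: "\<forall>x\<in>U. g differentiable (at x)"
    and cf: "Ck k U (d1 f)" and cg: "Ck k U (d1 g)" using Suc.prems by (auto simp: Ck_Suc)
  have eq: "d1 (\<lambda>x. f x + g x) y = d1 f y + d1 g y" if "y \<in> U" for y
    using df dg that unfolding d1_def by simp
  from Suc.IH[OF cf cg] have IH: "Ck k U (\<lambda>x. d1 f x + d1 g x)"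
    "\<forall>j\<le>k. \<forall>x\<in>U. nderiv j (\<lambda>x. d1 f x + d1 g x) x = nderiv j (d1 f) x + nderiv j (d1 g) x" by auto
  have c1: "Ck k U (d1 (\<lambda>x. f x + g x))"
    by (rule Ck_local[OF assms(1) _ IH(1)]) (simp add: eq)
  have "\<forall>x\<in>U. (\<lambda>x. f x + g x) differentiable (at x)" using df dg by auto
  moreover have "nderiv j (\<lambda>x. f x + g x) x = nderiv j f x + nderiv j g x" if "j \<le> Suc k" "x \<in> U" for j x
  proof (cases j)
    case 0 then show ?thesis by simp
  next
    case (Suc i)
    have "nderiv j (\<lambda>x. f x + g x) x = nderiv i (d1 (\<lambda>x. f x + g x)) x" by (simp add: Suc nderiv_Suc)
    also have "\<dots> = nderiv i (\<lambda>x. d1 f x + d1 g x) x"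
      by (rule nderiv_local[OF assms(1) _ \<open>x\<in>U\<close>]) (simp add: eq)
    also have "\<dots> = nderiv i (d1 f) x + nderiv i (d1 g) x" using IH(2) that Suc by auto
    finally show ?thesis by (simp add: Suc nderiv_Suc)
  qed
  ultimately show ?case using c1 by (simp add: Ck_Suc)
qed

lemma Ck_linear:
  assumes "open U" "bounded_linear L" "Ck k U f"
  shows "Ck k U (\<lambda>x. L (f x)) \<and> (\<forall>j\<le>k. \<forall>x\<in>U. nderiv j (\<lambda>x. L (f x)) x = L (nderiv j f x))"
  using assms(3)
proof (induction k arbitrary: f)
  case 0 then show ?case by simp
next
  case (Suc k)
  have df: "\<forall>x\<in>U. f differentiable (at x)" and cf: "Ck k U (d1 f)"
    using Suc.prems by (auto simp: Ck_Suc)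
  have eq: "d1 (\<lambda>x. L (f x)) y = L (d1 f y)" if "y \<in> U" for y
    using df that bounded_linear.has_vector_derivative[OF assms(2) d1_works] d1_eq by blast
  from Suc.IH[OF cf] have IH: "Ck k U (\<lambda>x. L (d1 f x))"
    "\<forall>j\<le>k. \<forall>x\<in>U. nderiv j (\<lambda>x. L (d1 f x)) x = L (nderiv j (d1 f) x)" by auto
  have c1: "Ck k U (d1 (\<lambda>x. L (f x)))"
    by (rule Ck_local[OF assms(1) _ IH(1)]) (simp add: eq)
  have "\<forall>x\<in>U. (\<lambda>x. L (f x)) differentiable (at x)"
    using df bounded_linear.has_vector_derivative[OF assms(2) d1_works] differentiableI_vector by blast
  moreover have "nderiv j (\<lambda>x. L (f x)) x = L (nderiv j f x)" if "j \<le> Suc k" "x \<in> U" for j x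
  proof (cases j)
    case 0 then show ?thesis by simp
  next
    case (Suc i)
    have "nderiv j (\<lambda>x. L (f x)) x = nderiv i (d1 (\<lambda>x. L (f x))) x" by (simp add: Suc nderiv_Suc)
    also have "\<dots> = nderiv i (\<lambda>x. L (d1 f x)) x"
      by (rule nderiv_local[OF assms(1) _ \<open>x\<in>U\<close>]) (simp add: eq)
    also have "\<dots> = L (nderiv i (d1 f) x)" using IH(2) that Suc by auto
    finally show ?thesis by (simp add: Suc nderiv_Suc)
  qed
  ultimately show ?case using c1 by (simp add: Ck_Suc)
qed

lemma Ck_scaleR:
  assumes "open U" "Ck k U a" "Ck k U g"
  shows "Ck k U (\<lambda>x. a x *\<^sub>R g x)"
  using assms(2,3)
proof (induction k arbitrary: a g)
  case 0 then show ?case by simp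
next
  case (Suc k)
  have da: "\<forall>x\<in>U. a differentiable (at x)" and dg: "\<forall>x\<in>U. g differentiable (at x)"
    and ca: "Ck k U (d1 a)" and cg: "Ck k U (d1 g)"
    using Suc.prems by (auto simp: Ck_Suc)
  have ca': "Ck k U a" and cg': "Ck k U g" using Ck_mono[OF Suc.prems(1)] Ck_mono[OF Suc.prems(2)] by auto
  have hv: "((\<lambda>x. a x *\<^sub>R g x) has_vector_derivative (a y *\<^sub>R d1 g y + d1 a y *\<^sub>R g y)) (at y)"
    if "y \<in> U" for y
    using da dg that d1_works[of a y] d1_works[of g y] has_vector_derivative_scaleR[of a "d1 a y" y UNIV g "d1 g y"]
    unfolding has_real_derivative_iff_has_vector_derivative by blast
  have eq: "d1 (\<lambda>x. a x *\<^sub>R g x) y = a y *\<^sub>R d1 g y + d1 a y *\<^sub>R g y" if "y \<in> U" for y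
    using hv[OF that] d1_eq by blast
  have cc: "Ck k U (\<lambda>y. a y *\<^sub>R d1 g y + d1 a y *\<^sub>R g y)"
    using Ck_add[OF assms(1) Suc.IH[OF ca' cg] Suc.IH[OF ca cg']] by blast
  have c1: "Ck k U (d1 (\<lambda>x. a x *\<^sub>R g x))"
    by (rule Ck_local[OF assms(1) _ cc]) (simp add: eq)
  have "\<forall>x\<in>U. (\<lambda>x. a x *\<^sub>R g x) differentiable (at x)"
    using hv differentiableI_vector by blast
  then show ?case using c1 by (simp add: Ck_Suc)
qed

lemma Ck_comp:
  assumes "open U" "open V" "Ck k V f" "Ck k U \<phi>" "\<phi> ` U \<subseteq> V"
  shows "Ck k U (\<lambda>x. f (\<phi> x))"
  using assms(3,4)
proof (induction k arbitrary: f)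
  case 0 then show ?case by simp
next
  case (Suc k)
  have df: "\<forall>x\<in>V. f differentiable (at x)" and cf: "Ck k V (d1 f)"
    and dp: "\<forall>x\<in>U. \<phi> differentiable (at x)" and cp: "Ck k U (d1 \<phi>)"
    using Suc.prems by (auto simp: Ck_Suc)
  have cp': "Ck k U \<phi>" using Ck_mono[OF Suc.prems(2)] by auto
  have hv: "((\<lambda>x. f (\<phi> x)) has_vector_derivative (d1 \<phi> y *\<^sub>R d1 f (\<phi> y))) (at y)" if "y \<in> U" for y
    using vector_diff_chain_at[OF d1_works d1_works, of \<phi> y f] dp df that assms(5)
    by (auto simp: o_def)
  have eq: "d1 (\<lambda>x. f (\<phi> x)) y = d1 \<phi> y *\<^sub>R d1 f (\<phi> y)" if "y \<in> U" for y
    using hv[OF that] d1_eq by blast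
  have cc: "Ck k U (\<lambda>y. d1 \<phi> y *\<^sub>R d1 f (\<phi> y))"
    using Ck_scaleR[OF assms(1) cp Suc.IH[OF cf cp']] .
  have c1: "Ck k U (d1 (\<lambda>x. f (\<phi> x)))"
    by (rule Ck_local[OF assms(1) _ cc]) (simp add: eq)
  have "\<forall>x\<in>U. (\<lambda>x. f (\<phi> x)) differentiable (at x)"
    using hv differentiableI_vector by blast
  then show ?case using c1 by (simp add: Ck_Suc)
qed

lemma d1_add: "f differentiable (at y) \<Longrightarrow> g differentiable (at y) \<Longrightarrow> d1 (\<lambda>x. f x + g x) y = d1 f y + d1 g y"
  unfolding d1_def by simp

lemma d1_scaleR: "a differentiable (at y) \<Longrightarrow> g differentiable (at y) \<Longrightarrow>
   d1 (\<lambda>x. a x *\<^sub>R g x) y = a y *\<^sub>R d1 g y + d1 a y *\<^sub>R g y"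
  using d1_works[of a y] d1_works[of g y] has_vector_derivative_scaleR[of a "d1 a y" y UNIV g "d1 g y"]
  unfolding has_real_derivative_iff_has_vector_derivative by (blast intro: d1_eq)

lemma d1_comp: "\<phi> differentiable (at y) \<Longrightarrow> f differentiable (at (\<phi> y)) \<Longrightarrow>
   d1 (\<lambda>x. f (\<phi> x)) y = d1 \<phi> y *\<^sub>R d1 f (\<phi> y)"
  using vector_diff_chain_at[OF d1_works d1_works, of \<phi> y f] by (auto simp: o_def intro: d1_eq)

lemma d1_linear: "bounded_linear L \<Longrightarrow> f differentiable (at y) \<Longrightarrow> d1 (\<lambda>x. L (f x)) y = L (d1 f y)"
  using bounded_linear.has_vector_derivative[OF _ d1_works] d1_eq by blast

lemma d1_const[simp]: "d1 (\<lambda>x. c) = (\<lambda>x. 0)"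
  unfolding d1_def by simp

definition sm :: "real set \<Rightarrow> (real \<Rightarrow> 'b::real_normed_vector) \<Rightarrow> bool" where
  "sm U f \<longleftrightarrow> (\<forall>k. Ck k U f)"

lemma sm_diff: "sm U f \<Longrightarrow> x \<in> U \<Longrightarrow> nderiv j f differentiable (at x)"
  unfolding sm_def Ck_def by (meson lessI)

lemma sm_diff0: "sm U f \<Longrightarrow> x \<in> U \<Longrightarrow> f differentiable (at x)"
  using sm_diff[of U f x 0] by simp

lemma sm_d1: "sm U f \<Longrightarrow> sm U (d1 f)"
  unfolding sm_def using Ck_Suc by blast

lemma sm_iff: "sm U f \<longleftrightarrow> (\<forall>x\<in>U. f differentiable (at x)) \<and> sm U (d1 f)"
  unfolding sm_def using Ck_Suc by (metis Ck_mono le_SucI order_refl)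

lemma sm_local: "open U \<Longrightarrow> (\<And>y. y \<in> U \<Longrightarrow> f y = g y) \<Longrightarrow> sm U f \<Longrightarrow> sm U g"
  unfolding sm_def using Ck_local by blast

lemma sm_add: "open U \<Longrightarrow> sm U f \<Longrightarrow> sm U g \<Longrightarrow> sm U (\<lambda>x. f x + g x)"
  unfolding sm_def using Ck_add by blast

lemma nderiv_add: "open U \<Longrightarrow> sm U f \<Longrightarrow> sm U g \<Longrightarrow> x \<in> U \<Longrightarrow>
   nderiv j (\<lambda>x. f x + g x) x = nderiv j f x + nderiv j g x"
  unfolding sm_def using Ck_add[of U j f g] by blast

lemma sm_linear: "open U \<Longrightarrow> bounded_linear L \<Longrightarrow> sm U f \<Longrightarrow> sm U (\<lambda>x. L (f x))"
  unfolding sm_def using Ck_linear by blast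

lemma nderiv_linear: "open U \<Longrightarrow> bounded_linear L \<Longrightarrow> sm U f \<Longrightarrow> x \<in> U \<Longrightarrow>
   nderiv j (\<lambda>x. L (f x)) x = L (nderiv j f x)"
  unfolding sm_def using Ck_linear[of U L j f] by blast

lemma sm_scaleR: "open U \<Longrightarrow> sm U a \<Longrightarrow> sm U g \<Longrightarrow> sm U (\<lambda>x. a x *\<^sub>R g x)"
  unfolding sm_def using Ck_scaleR by blast

lemma sm_mult: "open U \<Longrightarrow> sm U a \<Longrightarrow> sm U (g::real\<Rightarrow>real) \<Longrightarrow> sm U (\<lambda>x. a x * g x)"
  using sm_scaleR[of U a g] by simp

lemma sm_comp: "open U \<Longrightarrow> open V \<Longrightarrow> sm V f \<Longrightarrow> sm U \<phi> \<Longrightarrow> \<phi> ` U \<subseteq> V \<Longrightarrow> sm U (\<lambda>x. f (\<phi> x))"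
  unfolding sm_def using Ck_comp by blast

lemma nderiv_const: "nderiv (Suc j) (\<lambda>x. c) = (\<lambda>x. 0)"
  by (induction j) (simp_all add: nderiv_Suc)

lemma sm_const: "sm U (\<lambda>x. c)"
proof -
  have "nderiv j (\<lambda>x. c) differentiable (at x)" for j x
    by (cases j) (simp_all add: nderiv_const)
  then show ?thesis unfolding sm_def Ck_def by blast
qed

lemma sm_minus: "open U \<Longrightarrow> sm U f \<Longrightarrow> sm U g \<Longrightarrow> sm U (\<lambda>x. f x - g x)"
proof -
  assume a: "open U" "sm U f" "sm U g"
  have s: "sm U (\<lambda>x. - g x)" using sm_linear[OF a(1) bounded_linear_minus[OF bounded_linear_ident] a(3)] by simp
  show ?thesis using sm_add[OF a(1) a(2) s] by simp
qed

lemma nderiv_minus: "open U \<Longrightarrow> sm U f \<Longrightarrow> sm U g \<Longrightarrow> x \<in> U \<Longrightarrow>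
   nderiv j (\<lambda>x. f x - g x) x = nderiv j f x - nderiv j g x"
proof -
  assume a: "open U" "sm U f" "sm U g" "x \<in> U"
  have s: "sm U (\<lambda>x. - g x)" using sm_linear[OF a(1) bounded_linear_minus[OF bounded_linear_ident] a(3)] by simp
  have "nderiv j (\<lambda>x. - g x) x = - nderiv j g x"
    using nderiv_linear[OF a(1) bounded_linear_minus[OF bounded_linear_ident] a(3) a(4)] by simp
  then show ?thesis using nderiv_add[OF a(1) a(2) s a(4), of j] by simp
qed

lemma nderiv_power: "nderiv j (\<lambda>t::real. t ^ m) = (\<lambda>t. (\<Prod>i<j. real (m - i)) * t ^ (m - j))"
proof (induction j)
  case 0 then show ?case by simp
next
  case (Suc j)
  have "((\<lambda>t. (\<Prod>i<j. real (m - i)) * t ^ (m - j)) has_real_derivative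
        (\<Prod>i<j. real (m - i)) * (real (m - j) * x ^ (m - j - 1))) (at x)" for x
    by (auto intro!: derivative_eq_intros)
  then have "d1 (\<lambda>t. (\<Prod>i<j. real (m - i)) * t ^ (m - j)) x =
     (\<Prod>i<Suc j. real (m - i)) * x ^ (m - Suc j)" for x
    unfolding has_real_derivative_iff_has_vector_derivative
    by (auto dest!: d1_eq simp: prod.lessThan_Suc algebra_simps)
  then show ?case by (simp add: nderiv_Suc' Suc fun_eq_iff)
qed

lemma sm_power: "sm U (\<lambda>t::real. t ^ m)"
proof -
  have "nderiv j (\<lambda>t::real. t ^ m) differentiable (at x)" for j x
    unfolding nderiv_power by (auto intro!: derivative_intros)
  then show ?thesis unfolding sm_def Ck_def by blast
qed

lemma prod_fact_aux: "(\<Prod>i<m. real (m - i)) = fact m"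
proof (induction m)
  case 0 then show ?case by simp
next
  case (Suc m)
  have "(\<Prod>i<Suc m. real (Suc m - i)) = real (Suc m) * (\<Prod>i<m. real (Suc m - Suc i))"
    by (subst prod.lessThan_Suc_shift) simp
  also have "\<dots> = real (Suc m) * fact m" using Suc by simp
  finally show ?case by simp
qed

lemma nderiv_power0: "nderiv j (\<lambda>t::real. t ^ m) 0 = (if j = m then fact m else 0)"
proof -
  consider "j < m" | "j = m" | "j > m" by linarith
  then show ?thesis
  proof cases
    case 3
    then have "(\<Prod>i<j. real (m - i)) = 0" by (intro prod_zero) auto
    then show ?thesis using 3 by (simp add: nderiv_power)
  qed (use prod_fact_aux[of m] in \<open>auto simp: nderiv_power\<close>)
qed

definition vz :: "nat \<Rightarrow> (real \<Rightarrow> 'b::real_normed_vector) \<Rightarrow> bool" where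
  "vz m f \<longleftrightarrow> (\<forall>j<m. nderiv j f 0 = 0)"

lemma vz_0[simp]: "vz 0 f" by (simp add: vz_def)

lemma vz_Suc: "vz (Suc m) f \<longleftrightarrow> f 0 = 0 \<and> vz m (d1 f)"
  unfolding vz_def by (metis (no_types, lifting) Suc_mono less_Suc_eq_0_disj nderiv_0 nderiv_Suc)

lemma vz_mono: "vz m f \<Longrightarrow> k \<le> m \<Longrightarrow> vz k f"
  unfolding vz_def by auto

lemma vz_local: "open U \<Longrightarrow> 0 \<in> U \<Longrightarrow> (\<And>y. y \<in> U \<Longrightarrow> f y = g y) \<Longrightarrow> vz m f \<Longrightarrow> vz m g"
  unfolding vz_def using nderiv_local by metis

lemma vz_add: "open U \<Longrightarrow> 0 \<in> U \<Longrightarrow> sm U f \<Longrightarrow> sm U g \<Longrightarrow> vz m f \<Longrightarrow> vz m g \<Longrightarrow> vz m (\<lambda>x. f x + g x)"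
  unfolding vz_def using nderiv_add by fastforce

lemma vz_linear: "open U \<Longrightarrow> 0 \<in> U \<Longrightarrow> bounded_linear L \<Longrightarrow> sm U f \<Longrightarrow> vz m f \<Longrightarrow> vz m (\<lambda>x. L (f x))"
proof -
  assume a: "open U" "0 \<in> U" "bounded_linear L" "sm U f" "vz m f"
  have "L 0 = 0" using a(3) by (simp add: bounded_linear.linear linear_0)
  then show ?thesis using a nderiv_linear[OF a(1,3,4,2)] unfolding vz_def by simp
qed

lemma d1_scaleR_U: "open U \<Longrightarrow> sm U a \<Longrightarrow> sm U g \<Longrightarrow> y \<in> U \<Longrightarrow>
   d1 (\<lambda>x. a x *\<^sub>R g x) y = a y *\<^sub>R d1 g y + d1 a y *\<^sub>R g y"
  by (rule d1_scaleR) (auto intro: sm_diff0)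

lemma vz_scaleR_aux:
  assumes "open U" "0 \<in> U"
  shows "p + q = N \<Longrightarrow> sm U a \<Longrightarrow> sm U g \<Longrightarrow> vz p a \<Longrightarrow> vz q g \<Longrightarrow>
    vz N (\<lambda>x. a x *\<^sub>R g x) \<and>
    nderiv N (\<lambda>x. a x *\<^sub>R g x) 0 = (real (N choose p) * nderiv p a 0) *\<^sub>R nderiv q g 0"
proof (induction N arbitrary: p q a g)
  case 0 then show ?case by simp
next
  case (Suc N)
  note sa = Suc.prems(2) and sg = Suc.prems(3) and IH = Suc.IH and pq = Suc.prems(1)
    and vpa = Suc.prems(4) and vqg = Suc.prems(5)
  have sa': "sm U (d1 a)" and sg': "sm U (d1 g)" using sa sg sm_d1 by auto
  define T1 where "T1 = (\<lambda>x. a x *\<^sub>R d1 g x)"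
  define T2 where "T2 = (\<lambda>x. d1 a x *\<^sub>R g x)"
  have sT1: "sm U T1" unfolding T1_def by (rule sm_scaleR[OF assms(1) sa sg'])
  have sT2: "sm U T2" unfolding T2_def by (rule sm_scaleR[OF assms(1) sa' sg])
  have eq: "d1 (\<lambda>x. a x *\<^sub>R g x) y = T1 y + T2 y" if "y \<in> U" for y
    unfolding T1_def T2_def using d1_scaleR_U[OF assms(1) sa sg that] .
  have z0: "a 0 *\<^sub>R g 0 = 0"
  proof (cases p)
    case 0 then have "q > 0" using pq by simp
    then have "nderiv 0 g 0 = 0" using vqg unfolding vz_def by blast
    then show ?thesis by simp
  next
    case (Suc p') then have "nderiv 0 a 0 = 0" using vpa unfolding vz_def by blast
    then show ?thesis by simp
  qed
  have main: "vz N T1 \<and> vz N T2 \<and> nderiv N T1 0 + nderiv N T2 0 =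
      (real (Suc N choose p) * nderiv p a 0) *\<^sub>R nderiv q g 0"
  proof (cases p)
    case 0
    then have q: "q = Suc N" using pq by simp
    have vg: "vz N (d1 g)" using vqg q by (simp add: vz_Suc)
    have vg': "vz N g" using vqg q vz_mono[of q g N] by simp
    note I1 = IH[of 0 N a "d1 g", OF _ sa sg' _ vg]
    note I2 = IH[of 0 N "d1 a" g, OF _ sa' sg _ vg']
    have "nderiv N g 0 = 0" using vqg q unfolding vz_def by simp
    then show ?thesis using I1 I2 0 q unfolding T1_def T2_def by (simp add: nderiv_Suc)
  next
    case (Suc p')
    show ?thesis
    proof (cases q)
      case 0
      then have p': "p' = N" using Suc pq by simp
      have va: "vz N a" using vpa Suc p' vz_mono[of p a N] by simp
      have va': "vz N (d1 a)" using vpa Suc p' by (simp add: vz_Suc)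
      note I1 = IH[of N 0 a "d1 g", OF _ sa sg' va]
      note I2 = IH[of N 0 "d1 a" g, OF _ sa' sg va']
      have "nderiv N a 0 = 0" using vpa Suc p' unfolding vz_def by simp
      then show ?thesis using I1 I2 0 Suc p' unfolding T1_def T2_def by (simp add: nderiv_Suc)
    next
      case (Suc q')
      have vg: "vz q' (d1 g)" using \<open>vz q g\<close> Suc by (simp add: vz_Suc)
      have va': "vz p' (d1 a)" using \<open>vz p a\<close> \<open>p = Suc p'\<close> by (simp add: vz_Suc)
      note I1 = IH[of p q' a "d1 g", OF _ sa sg' \<open>vz p a\<close> vg]
      note I2 = IH[of p' q "d1 a" g, OF _ sa' sg va' \<open>vz q g\<close>]
      have NN: "p + q' = N" "p' + q = N" using pq Suc \<open>p = Suc p'\<close> by auto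
      have "real (Suc N choose p) = real (N choose p) + real (N choose p')"
        using \<open>p = Suc p'\<close> by simp
      then show ?thesis using I1 I2 NN Suc \<open>p = Suc p'\<close> unfolding T1_def T2_def
        by (simp add: nderiv_Suc algebra_simps)
    qed
  qed
  have vs: "vz N (\<lambda>y. T1 y + T2 y)" using vz_add[OF assms sT1 sT2] main by blast
  have vd: "vz N (d1 (\<lambda>x. a x *\<^sub>R g x))"
    by (rule vz_local[OF assms(1,2) _ vs]) (simp add: eq)
  have "nderiv (Suc N) (\<lambda>x. a x *\<^sub>R g x) 0 = nderiv N (\<lambda>y. T1 y + T2 y) 0"
    unfolding nderiv_Suc by (rule nderiv_local[OF assms(1) _ assms(2)]) (simp add: eq)
  also have "\<dots> = nderiv N T1 0 + nderiv N T2 0" by (rule nderiv_add[OF assms(1) sT1 sT2 assms(2)])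
  finally show ?case using main vd z0 by (simp add: vz_Suc)
qed

lemma vz_scaleR:
  assumes "open U" "0 \<in> U" "sm U a" "sm U g" "vz p a" "vz q g"
  shows "vz (p + q) (\<lambda>x. a x *\<^sub>R g x)"
    and "nderiv (p + q) (\<lambda>x. a x *\<^sub>R g x) 0 = (real ((p + q) choose p) * nderiv p a 0) *\<^sub>R nderiv q g 0"
  using vz_scaleR_aux[OF assms(1,2) refl assms(3-6)] by auto

lemma vz_comp:
  assumes "open U" "open V" "0 \<in> U" "sm U \<phi>" "\<phi> ` U \<subseteq> V" "\<phi> 0 = 0"
  shows "sm V f \<Longrightarrow> vz m f \<Longrightarrow> vz m (\<lambda>x. f (\<phi> x))"
proof (induction m arbitrary: f)
  case 0 then show ?case by simp
next
  case (Suc m)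
  have sf': "sm V (d1 f)" using Suc.prems sm_d1 by blast
  have v: "vz m (d1 f)" using Suc.prems by (simp add: vz_Suc)
  have s1: "sm U (\<lambda>y. d1 f (\<phi> y))" by (rule sm_comp[OF assms(1,2) sf' assms(4,5)])
  have eq: "d1 (\<lambda>x. f (\<phi> x)) y = d1 \<phi> y *\<^sub>R d1 f (\<phi> y)" if "y \<in> U" for y
    using that assms(5) by (intro d1_comp sm_diff0[OF assms(4)] sm_diff0[OF Suc.prems(1)]) auto
  have "vz (0 + m) (\<lambda>y. d1 \<phi> y *\<^sub>R d1 f (\<phi> y))"
    by (rule vz_scaleR(1)[OF assms(1,3) sm_d1[OF assms(4)] s1 vz_0 Suc.IH[OF sf' v]])
  then have vv: "vz m (\<lambda>y. d1 \<phi> y *\<^sub>R d1 f (\<phi> y))" by simp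
  have "vz m (d1 (\<lambda>x. f (\<phi> x)))"
    by (rule vz_local[OF assms(1,3) _ vv]) (simp add: eq)
  moreover have "f (\<phi> 0) = 0" using Suc.prems assms(6) by (simp add: vz_Suc)
  ultimately show ?case by (simp add: vz_Suc)
qed

lemma vz_pow:
  fixes \<psi> :: "real \<Rightarrow> real"
  assumes "open U" "0 \<in> U" "sm U \<psi>" "\<psi> 0 = 0"
  shows "sm U (\<lambda>x. \<psi> x ^ m) \<and> vz m (\<lambda>x. \<psi> x ^ m) \<and> nderiv m (\<lambda>x. \<psi> x ^ m) 0 = fact m * (d1 \<psi> 0) ^ m"
proof (induction m)
  case 0 then show ?case by (simp add: sm_const)
next
  case (Suc m)
  have v1: "vz 1 \<psi>" using assms by (simp add: vz_Suc)
  have s: "sm U (\<lambda>x. \<psi> x * \<psi> x ^ m)" using sm_mult[OF assms(1) assms(3)] Suc by blast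
  note A = vz_scaleR[OF assms(1,2,3) _ v1, of "\<lambda>x. \<psi> x ^ m" m]
  then show ?case using Suc s by (simp add: nderiv_Suc algebra_simps)
qed

lemma d1_scaleR_const: "f differentiable (at x) \<Longrightarrow> d1 (\<lambda>y. c *\<^sub>R f y) x = c *\<^sub>R d1 f x"
  using d1_linear[OF bounded_linear_scaleR_right] by blast

lemma sm_dderivs:
  assumes "open U" "sm U f"
  shows "\<forall>x\<in>U. dderivs vs f x = prod_list vs *\<^sub>R nderiv (length vs) f x"
proof (induction vs)
  case Nil then show ?case by simp
next
  case (Cons v vs)
  show ?case
  proof
    fix x assume x: "x \<in> U"
    let ?F = "\<lambda>y. prod_list vs *\<^sub>R nderiv (length vs) f y"
    have dF: "?F differentiable (at x)" using sm_diff[OF assms(2) x] by (auto intro: differentiable_scaleR)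
    have "frechet_derivative (dderivs vs f) (at x) = frechet_derivative ?F (at x)"
      by (rule frechet_derivative_transform_within_open[OF dF assms(1) x, symmetric]) (use Cons in auto)
    also have "\<dots> = (\<lambda>r. r *\<^sub>R d1 ?F x)"
      using frechet_derivative_eq_vector_derivative[OF dF] unfolding d1_def by simp
    finally have "dderivs (v # vs) f x = v *\<^sub>R d1 ?F x" by simp
    also have "\<dots> = v *\<^sub>R (prod_list vs *\<^sub>R nderiv (Suc (length vs)) f x)"
      using d1_scaleR_const[OF sm_diff[OF assms(2) x]] by (simp add: nderiv_Suc')
    finally show "dderivs (v # vs) f x = prod_list (v # vs) *\<^sub>R nderiv (length (v # vs)) f x" by simp
  qed
qed

lemma sm_smooth_on:
  assumes "open U" "sm U f"
  shows "smooth_on U f"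
  unfolding smooth_on_def
proof (intro conjI allI ballI assms(1))
  fix vs x assume x: "x \<in> U"
  have dd: "(\<lambda>y. prod_list vs *\<^sub>R nderiv (length vs) f y) differentiable (at x)"
    using sm_diff[OF assms(2) x] by (auto intro: differentiable_scaleR)
  show "dderivs vs f differentiable (at x)"
    by (rule differentiable_local[OF assms(1) x _ dd]) (use sm_dderivs[OF assms] in auto)
qed

lemma smooth_on_sm:
  fixes f :: "real \<Rightarrow> 'b::real_normed_vector"
  assumes "smooth_on U f"
  shows "sm U f"
proof -
  have o: "open U" and d: "\<And>vs x. x \<in> U \<Longrightarrow> dderivs vs f differentiable (at x)"
    using assms unfolding smooth_on_def by auto
  have eq: "\<forall>x\<in>U. nderiv k f x = dderivs (replicate k 1) f x" for k
  proof (induction k)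
    case 0 then show ?case by simp
  next
    case (Suc k)
    show ?case
    proof
      fix x assume x: "x \<in> U"
      have "nderiv (Suc k) f x = d1 (dderivs (replicate k 1) f) x"
        unfolding nderiv_Suc' by (rule d1_local[OF o x]) (use Suc in auto)
      also have "\<dots> = dderivs (replicate (Suc k) 1) f x"
        using frechet_derivative_eq_vector_derivative[OF d[OF x]] unfolding d1_def by simp
      finally show "nderiv (Suc k) f x = dderivs (replicate (Suc k) 1) f x" .
    qed
  qed
  have "nderiv k f differentiable (at x)" if "x \<in> U" for k x
    by (rule differentiable_local[OF o that _ d[OF that, of "replicate k 1"]]) (use eq in auto)
  then show ?thesis unfolding sm_def Ck_def by blast
qed

lemma smooth_on_iff_sm: "smooth_on U (f::real \<Rightarrow> 'b::real_normed_vector) \<longleftrightarrow> open U \<and> sm U f"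
  using sm_smooth_on smooth_on_sm smooth_on_def by blast

lemma dderivs_append: "dderivs vs (dderivs [e] G) = dderivs (vs @ [e]) G"
  by (induction vs) simp_all

lemma smooth_on_partial: "smooth_on V G \<Longrightarrow> smooth_on V (dderivs [e] G)"
  unfolding smooth_on_def dderivs_append by blast

definition P1 :: "(real \<times> real \<Rightarrow> real \<times> real) \<Rightarrow> real \<times> real \<Rightarrow> real \<times> real" where
  "P1 G = dderivs [(1,0)] G"
definition P2 :: "(real \<times> real \<Rightarrow> real \<times> real) \<Rightarrow> real \<times> real \<Rightarrow> real \<times> real" where
  "P2 G = dderivs [(0,1)] G"

lemma frechet_pair:
  assumes "G differentiable (at p)"
  shows "frechet_derivative G (at p) v = fst v *\<^sub>R P1 G p + snd v *\<^sub>R P2 G p"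
proof -
  have l: "linear (frechet_derivative G (at p))"
    using frechet_derivative_works assms has_derivative_linear by blast
  have vsplit: "v = fst v *\<^sub>R (1,0) + snd v *\<^sub>R (0,1)" by (cases v) simp
  have "frechet_derivative G (at p) v = frechet_derivative G (at p) (fst v *\<^sub>R (1,0) + snd v *\<^sub>R (0,1))"
    using vsplit by (simp only: vsplit[symmetric])
  also have "\<dots> = fst v *\<^sub>R frechet_derivative G (at p) (1,0) + snd v *\<^sub>R frechet_derivative G (at p) (0,1)"
    by (simp only: linear_add[OF l] linear_scale[OF l])
  finally have "frechet_derivative G (at p) v =
     fst v *\<^sub>R frechet_derivative G (at p) (1,0) + snd v *\<^sub>R frechet_derivative G (at p) (0,1)" .
  then show ?thesis unfolding P1_def P2_def by simp
qed

lemma chain_d1: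
  assumes "c differentiable (at y)" "G differentiable (at (c y))"
  shows "((\<lambda>t. G (c t)) has_vector_derivative
           (fst (d1 c y) *\<^sub>R P1 G (c y) + snd (d1 c y) *\<^sub>R P2 G (c y))) (at y)"
proof -
  let ?D = "frechet_derivative G (at (c y))"
  have hG: "(G has_derivative ?D) (at (c y))" using assms(2) frechet_derivative_works by blast
  have hc: "(c has_derivative (\<lambda>h. h *\<^sub>R d1 c y)) (at y)"
    using d1_works[OF assms(1)] unfolding has_vector_derivative_def .
  have "((\<lambda>t. G (c t)) has_derivative (\<lambda>h. ?D (h *\<^sub>R d1 c y))) (at y)"
    using diff_chain_at[OF hc hG] by (simp add: o_def)
  moreover have "?D (h *\<^sub>R d1 c y) = h *\<^sub>R ?D (d1 c y)" for h
    using hG has_derivative_linear linear_scale by blast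
  ultimately have "((\<lambda>t. G (c t)) has_vector_derivative ?D (d1 c y)) (at y)"
    unfolding has_vector_derivative_def by simp
  then show ?thesis using frechet_pair[OF assms(2)] by simp
qed

lemma smooth_on_diff: "smooth_on V G \<Longrightarrow> p \<in> V \<Longrightarrow> G differentiable (at p)"
proof -
  assume "smooth_on V G" "p \<in> V"
  then have "dderivs [] G differentiable (at p)" unfolding smooth_on_def by blast
  then show ?thesis by simp
qed

lemma chain_Ck:
  fixes G :: "real \<times> real \<Rightarrow> real \<times> real" and c :: "real \<Rightarrow> real \<times> real"
  assumes "open U" "open V" "sm U c" "c ` U \<subseteq> V"
  shows "smooth_on V G \<Longrightarrow> Ck k U (\<lambda>t. G (c t))"
proof (induction k arbitrary: G)
  case 0 then show ?case by simp
next
  case (Suc k)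
  have sp1: "smooth_on V (P1 G)" and sp2: "smooth_on V (P2 G)"
    unfolding P1_def P2_def using smooth_on_partial Suc.prems by auto
  have dc: "c differentiable (at y)" if "y \<in> U" for y using sm_diff0[OF assms(3) that] .
  have dG: "G differentiable (at (c y))" if "y \<in> U" for y
    using smooth_on_diff[OF Suc.prems] assms(4) that by blast
  have s1: "sm U (\<lambda>y. fst (d1 c y))" by (rule sm_linear[OF assms(1) bounded_linear_fst sm_d1[OF assms(3)]])
  have s2: "sm U (\<lambda>y. snd (d1 c y))" by (rule sm_linear[OF assms(1) bounded_linear_snd sm_d1[OF assms(3)]])
  have cc: "Ck k U (\<lambda>y. fst (d1 c y) *\<^sub>R P1 G (c y) + snd (d1 c y) *\<^sub>R P2 G (c y))"
    using Ck_add[OF assms(1) Ck_scaleR[OF assms(1) _ Suc.IH[OF sp1]] Ck_scaleR[OF assms(1) _ Suc.IH[OF sp2]]]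
      s1 s2 unfolding sm_def by blast
  have eqd: "d1 (\<lambda>t. G (c t)) y = fst (d1 c y) *\<^sub>R P1 G (c y) + snd (d1 c y) *\<^sub>R P2 G (c y)"
    if "y \<in> U" for y by (rule d1_eq[OF chain_d1[OF dc[OF that] dG[OF that]]])
  have c1: "Ck k U (d1 (\<lambda>t. G (c t)))"
    by (rule Ck_local[OF assms(1) _ cc]) (simp add: eqd)
  have "\<forall>y\<in>U. (\<lambda>t. G (c t)) differentiable (at y)"
    using chain_d1[OF dc dG] differentiableI_vector by blast
  then show ?case using c1 by (simp add: Ck_Suc)
qed

lemma chain_sm:
  fixes G :: "real \<times> real \<Rightarrow> real \<times> real" and c :: "real \<Rightarrow> real \<times> real"
  assumes "open U" "open V" "sm U c" "c ` U \<subseteq> V" "smooth_on V G"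
  shows "sm U (\<lambda>t. G (c t))"
  using chain_Ck[OF assms] unfolding sm_def by blast

lemma chain_d1_U:
  fixes G :: "real \<times> real \<Rightarrow> real \<times> real" and c :: "real \<Rightarrow> real \<times> real"
  assumes "open U" "open V" "sm U c" "c ` U \<subseteq> V" "smooth_on V G" "y \<in> U"
  shows "d1 (\<lambda>t. G (c t)) y = fst (d1 c y) *\<^sub>R P1 G (c y) + snd (d1 c y) *\<^sub>R P2 G (c y)"
  using chain_d1[OF sm_diff0[OF assms(3,6)] smooth_on_diff[OF assms(5)]] assms(4,6) d1_eq by blast

lemma d1_minus_const: "f differentiable (at y) \<Longrightarrow> d1 (\<lambda>x. f x - k) y = d1 f y"
  unfolding d1_def by simp

lemma chain_r:
  fixes H :: "real \<times> real \<Rightarrow> real \<times> real" and c :: "real \<Rightarrow> real \<times> real"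
  assumes "open U" "open V" "0 \<in> U" "sm U c" "c ` U \<subseteq> V" "smooth_on V H" "vz m (d1 c)"
  shows "sm U (\<lambda>y. H (c y) - H (c 0)) \<and> vz (Suc m) (\<lambda>y. H (c y) - H (c 0))"
proof -
  have sH: "sm U (\<lambda>y. H (c y))" by (rule chain_sm[OF assms(1,2,4,5,6)])
  have s: "sm U (\<lambda>y. H (c y) - H (c 0))" by (rule sm_minus[OF assms(1) sH sm_const])
  have sa1: "sm U (\<lambda>y. fst (d1 c y))" by (rule sm_linear[OF assms(1) bounded_linear_fst sm_d1[OF assms(4)]])
  have sa2: "sm U (\<lambda>y. snd (d1 c y))" by (rule sm_linear[OF assms(1) bounded_linear_snd sm_d1[OF assms(4)]])
  have va1: "vz m (\<lambda>y. fst (d1 c y))" by (rule vz_linear[OF assms(1,3) bounded_linear_fst sm_d1[OF assms(4)] assms(7)])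
  have va2: "vz m (\<lambda>y. snd (d1 c y))" by (rule vz_linear[OF assms(1,3) bounded_linear_snd sm_d1[OF assms(4)] assms(7)])
  have sp1: "smooth_on V (P1 H)" and sp2: "smooth_on V (P2 H)"
    unfolding P1_def P2_def using smooth_on_partial assms(6) by auto
  have sq1: "sm U (\<lambda>y. P1 H (c y))" by (rule chain_sm[OF assms(1,2,4,5) sp1])
  have sq2: "sm U (\<lambda>y. P2 H (c y))" by (rule chain_sm[OF assms(1,2,4,5) sp2])
  have v1: "vz (m + 0) (\<lambda>y. fst (d1 c y) *\<^sub>R P1 H (c y))" by (rule vz_scaleR(1)[OF assms(1,3) sa1 sq1 va1 vz_0])
  have v2: "vz (m + 0) (\<lambda>y. snd (d1 c y) *\<^sub>R P2 H (c y))" by (rule vz_scaleR(1)[OF assms(1,3) sa2 sq2 va2 vz_0])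
  have vs: "vz m (\<lambda>y. fst (d1 c y) *\<^sub>R P1 H (c y) + snd (d1 c y) *\<^sub>R P2 H (c y))"
    using vz_add[OF assms(1,3) sm_scaleR[OF assms(1) sa1 sq1] sm_scaleR[OF assms(1) sa2 sq2]] v1 v2 by simp
  have eq: "d1 (\<lambda>y. H (c y) - H (c 0)) y = fst (d1 c y) *\<^sub>R P1 H (c y) + snd (d1 c y) *\<^sub>R P2 H (c y)"
    if "y \<in> U" for y
    using d1_minus_const[OF sm_diff0[OF sH that]] chain_d1_U[OF assms(1,2,4,5,6) that] by simp
  have "vz m (d1 (\<lambda>y. H (c y) - H (c 0)))" by (rule vz_local[OF assms(1,3) _ vs]) (simp add: eq)
  then show ?thesis using s by (simp add: vz_Suc)
qed

lemma chain_vz: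
  fixes G :: "real \<times> real \<Rightarrow> real \<times> real" and c :: "real \<Rightarrow> real \<times> real"
  assumes "open U" "open V" "0 \<in> U" "sm U c" "c ` U \<subseteq> V" "smooth_on V G" "vz m (d1 c)"
    and "1 \<le> k" "k \<le> 2 * m + 1"
  shows "nderiv k (\<lambda>t. G (c t)) 0 = fst (nderiv k c 0) *\<^sub>R P1 G (c 0) + snd (nderiv k c 0) *\<^sub>R P2 G (c 0)"
proof -
  obtain j where k: "k = Suc j" and j: "j < m + Suc m" using assms(8,9) by (cases k) auto
  have sp1: "smooth_on V (P1 G)" and sp2: "smooth_on V (P2 G)"
    unfolding P1_def P2_def using smooth_on_partial assms(6) by auto
  define r1 where "r1 = (\<lambda>y. P1 G (c y) - P1 G (c 0))"
  define r2 where "r2 = (\<lambda>y. P2 G (c y) - P2 G (c 0))"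
  have r1: "sm U r1 \<and> vz (Suc m) r1" unfolding r1_def by (rule chain_r[OF assms(1-5) sp1 assms(7)])
  have r2: "sm U r2 \<and> vz (Suc m) r2" unfolding r2_def by (rule chain_r[OF assms(1-5) sp2 assms(7)])
  define a1 where "a1 = (\<lambda>y. fst (d1 c y))"
  define a2 where "a2 = (\<lambda>y. snd (d1 c y))"
  have sa1: "sm U a1" unfolding a1_def by (rule sm_linear[OF assms(1) bounded_linear_fst sm_d1[OF assms(4)]])
  have sa2: "sm U a2" unfolding a2_def by (rule sm_linear[OF assms(1) bounded_linear_snd sm_d1[OF assms(4)]])
  have va1: "vz m a1" unfolding a1_def by (rule vz_linear[OF assms(1,3) bounded_linear_fst sm_d1[OF assms(4)] assms(7)])
  have va2: "vz m a2" unfolding a2_def by (rule vz_linear[OF assms(1,3) bounded_linear_snd sm_d1[OF assms(4)] assms(7)])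
  define K1 where "K1 = P1 G (c 0)"
  define K2 where "K2 = P2 G (c 0)"
  define E where "E = (\<lambda>y. a1 y *\<^sub>R r1 y + a2 y *\<^sub>R r2 y)"
  define C0 where "C0 = (\<lambda>y. a1 y *\<^sub>R K1 + a2 y *\<^sub>R K2)"
  have sE1: "sm U (\<lambda>y. a1 y *\<^sub>R r1 y)" using sm_scaleR[OF assms(1) sa1] r1 by blast
  have sE2: "sm U (\<lambda>y. a2 y *\<^sub>R r2 y)" using sm_scaleR[OF assms(1) sa2] r2 by blast
  have sE: "sm U E" unfolding E_def by (rule sm_add[OF assms(1) sE1 sE2])
  have vE: "vz (m + Suc m) E" unfolding E_def
    using vz_add[OF assms(1,3) sE1 sE2] vz_scaleR(1)[OF assms(1,3) sa1 _ va1, of r1 "Suc m"]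
      vz_scaleR(1)[OF assms(1,3) sa2 _ va2, of r2 "Suc m"] r1 r2 by blast
  have sC1: "sm U (\<lambda>y. a1 y *\<^sub>R K1)" by (rule sm_linear[OF assms(1) bounded_linear_scaleR_left sa1])
  have sC2: "sm U (\<lambda>y. a2 y *\<^sub>R K2)" by (rule sm_linear[OF assms(1) bounded_linear_scaleR_left sa2])
  have sC: "sm U C0" unfolding C0_def by (rule sm_add[OF assms(1) sC1 sC2])
  have eq: "d1 (\<lambda>t. G (c t)) y = C0 y + E y" if "y \<in> U" for y
    using chain_d1_U[OF assms(1,2,4,5,6) that] unfolding C0_def E_def r1_def r2_def a1_def a2_def K1_def K2_def
    by (simp add: algebra_simps)
  have "nderiv k (\<lambda>t. G (c t)) 0 = nderiv j (\<lambda>y. C0 y + E y) 0"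
    unfolding k nderiv_Suc by (rule nderiv_local[OF assms(1) _ assms(3)]) (simp add: eq)
  also have "\<dots> = nderiv j C0 0 + nderiv j E 0" by (rule nderiv_add[OF assms(1) sC sE assms(3)])
  also have "nderiv j E 0 = 0" using vE j unfolding vz_def by blast
  also have "nderiv j C0 0 = nderiv j (\<lambda>y. a1 y *\<^sub>R K1) 0 + nderiv j (\<lambda>y. a2 y *\<^sub>R K2) 0"
    unfolding C0_def by (rule nderiv_add[OF assms(1) sC1 sC2 assms(3)])
  also have "nderiv j (\<lambda>y. a1 y *\<^sub>R K1) 0 = nderiv j a1 0 *\<^sub>R K1"
    by (rule nderiv_linear[OF assms(1) bounded_linear_scaleR_left sa1 assms(3)])
  also have "nderiv j (\<lambda>y. a2 y *\<^sub>R K2) 0 = nderiv j a2 0 *\<^sub>R K2"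
    by (rule nderiv_linear[OF assms(1) bounded_linear_scaleR_left sa2 assms(3)])
  also have "nderiv j a1 0 = fst (nderiv k c 0)"
    unfolding a1_def k nderiv_Suc by (rule nderiv_linear[OF assms(1) bounded_linear_fst sm_d1[OF assms(4)] assms(3)])
  also have "nderiv j a2 0 = snd (nderiv k c 0)"
    unfolding a2_def k nderiv_Suc by (rule nderiv_linear[OF assms(1) bounded_linear_snd sm_d1[OF assms(4)] assms(3)])
  finally show ?thesis unfolding K1_def K2_def by simp
qed

lemma smooth_on_cont: "smooth_on U f \<Longrightarrow> continuous_on U f"
  by (rule differentiable_imp_continuous_on)
     (auto simp: differentiable_on_def intro: differentiable_at_withinI smooth_on_diff)

lemma open_vimage_smooth: "smooth_on U f \<Longrightarrow> open B \<Longrightarrow> open (f -` B \<inter> U)"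
  using smooth_on_cont continuous_on_open_vimage smooth_on_def by blast

lemma sm_subset: "sm U f \<Longrightarrow> V \<subseteq> U \<Longrightarrow> sm V f"
  unfolding sm_def Ck_def by blast

lemma det2_comb: "det2 (a *\<^sub>R P + b *\<^sub>R Q) (c *\<^sub>R P + d *\<^sub>R Q) = (a * d - b * c) * det2 P Q"
  by (cases P; cases Q) (simp add: det2_def algebra_simps)

lemma d1_ident: "d1 (\<lambda>x::real. x) y = 1"
  by (rule d1_eq) (simp add: has_real_derivative_iff_has_vector_derivative[symmetric])

lemma inverse_deriv_nonzero:
  fixes \<psi> g :: "real \<Rightarrow> real"
  assumes "open U" "0 \<in> U" "\<psi> 0 = 0" "sm U \<psi>" "g differentiable (at 0)" "\<forall>x\<in>U. g (\<psi> x) = x"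
  shows "d1 \<psi> 0 \<noteq> 0"
proof -
  have "d1 (\<lambda>x. g (\<psi> x)) 0 = d1 \<psi> 0 *\<^sub>R d1 g (\<psi> 0)"
    by (rule d1_comp) (use sm_diff0[OF assms(4,2)] assms(3,5) in auto)
  moreover have "d1 (\<lambda>x. g (\<psi> x)) 0 = d1 (\<lambda>x. x) 0"
    by (rule d1_local[OF assms(1,2)]) (use assms(6) in auto)
  ultimately have "d1 \<psi> 0 * d1 g 0 = 1" using d1_ident assms(3) by simp
  then show ?thesis by auto
qed

lemma inverse_det_nonzero:
  fixes \<Psi> G :: "real \<times> real \<Rightarrow> real \<times> real"
  assumes "open U" "p \<in> U" "\<Psi> differentiable (at p)" "G differentiable (at (\<Psi> p))" "\<forall>x\<in>U. G (\<Psi> x) = x"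
  shows "det2 (P1 G (\<Psi> p)) (P2 G (\<Psi> p)) \<noteq> 0"
proof -
  let ?DG = "frechet_derivative G (at (\<Psi> p))" and ?DP = "frechet_derivative \<Psi> (at p)"
  have "((\<lambda>x. G (\<Psi> x)) has_derivative (\<lambda>w. ?DG (?DP w))) (at p)"
    using diff_chain_at[OF frechet_derivative_works[THEN iffD1, OF assms(3)]
        frechet_derivative_works[THEN iffD1, OF assms(4)]] by (simp add: o_def)
  moreover have "((\<lambda>x. G (\<Psi> x)) has_derivative (\<lambda>w. w)) (at p)"
    by (rule has_derivative_transform_within_open[OF has_derivative_ident assms(1,2)]) (use assms(5) in auto)
  ultimately have e: "(\<lambda>w. ?DG (?DP w)) = (\<lambda>w. w)" by (rule has_derivative_unique)
  have w: "fst (?DP w) *\<^sub>R P1 G (\<Psi> p) + snd (?DP w) *\<^sub>R P2 G (\<Psi> p) = w" for w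
  proof -
    have "?DG (?DP w) = w" using fun_cong[OF e, of w] by simp
    then show ?thesis using frechet_pair[OF assms(4), of "?DP w"] by simp
  qed
  have "det2 (1,0) (0,1) = det2 (fst (?DP (1,0)) *\<^sub>R P1 G (\<Psi> p) + snd (?DP (1,0)) *\<^sub>R P2 G (\<Psi> p))
     (fst (?DP (0,1)) *\<^sub>R P1 G (\<Psi> p) + snd (?DP (0,1)) *\<^sub>R P2 G (\<Psi> p))"
    by (simp only: w)
  also have "\<dots> = (fst (?DP (1,0)) * snd (?DP (0,1)) - snd (?DP (1,0)) * fst (?DP (0,1)))
      * det2 (P1 G (\<Psi> p)) (P2 G (\<Psi> p))" by (rule det2_comb)
  finally have "det2 (1,0) (0,1) = (fst (?DP (1,0)) * snd (?DP (0,1)) - snd (?DP (1,0)) * fst (?DP (0,1)))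
      * det2 (P1 G (\<Psi> p)) (P2 G (\<Psi> p))" .
  then show ?thesis by (auto simp: det2_def)
qed

lemma reverse_dir:
  fixes n :: nat and I :: "real set" and \<gamma> :: "real \<Rightarrow> real \<times> real"
  assumes "n \<ge> 2" and "smooth_on I \<gamma>" and "0 \<in> I"
    and J: "0 \<in> J" "smooth_on J h" "\<forall>k\<le>n+2. nderiv k h 0 = 0"
    and A: "A_equiv_at0 \<gamma> (\<lambda>t. (t ^ n, t ^ (n+1)) + h t)"
  shows "(\<forall>k\<in>{1..n-1}. nderiv k \<gamma> 0 = 0) \<and> det2 (nderiv n \<gamma> 0) (nderiv (n+1) \<gamma> 0) \<noteq> 0"
proof -
  obtain \<psi> \<Psi> W where dpsi: "diffeo_germ \<psi> 0 0" and dPsi: "diffeo_germ \<Psi> (\<gamma> 0) ((\<lambda>t. (t ^ n, t ^ (n+1)) + h t) 0)"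
    and W: "open W" "0 \<in> W" "\<forall>s\<in>W. \<Psi> (\<gamma> s) = (\<lambda>t. (t ^ n, t ^ (n+1)) + h t) (\<psi> s)"
    using A unfolding A_equiv_at0_def by blast
  obtain U1 V1 g1 where U1: "0 \<in> U1" "\<psi> 0 = 0" "smooth_on U1 \<psi>" "smooth_on V1 g1" "\<psi> ` U1 = V1"
    "\<forall>x\<in>U1. g1 (\<psi> x) = x"
    using dpsi unfolding diffeo_germ_def by blast
  obtain U2 V2 G where U2: "\<gamma> 0 \<in> U2" "smooth_on U2 \<Psi>" "smooth_on V2 G" "\<Psi> ` U2 = V2"
    "\<forall>x\<in>U2. G (\<Psi> x) = x"
    using dPsi unfolding diffeo_germ_def by blast
  have oU1: "open U1" and oV1: "open V1" and oU2: "open U2" and oV2: "open V2" and oI: "open I" and oJ: "open J"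
    using U1 U2 assms J unfolding smooth_on_def by auto
  define U where "U = (\<psi> -` J \<inter> U1) \<inter> (\<gamma> -` U2 \<inter> I) \<inter> W"
  have oU: "open U" unfolding U_def
    using open_vimage_smooth[OF U1(3) oJ] open_vimage_smooth[OF assms(2) oU2] W(1) by blast
  have U0: "0 \<in> U" unfolding U_def using U1 U2 J assms(3) W by auto
  have UU1: "U \<subseteq> U1" unfolding U_def by auto
  have spsi: "sm U \<psi>" using sm_subset[OF smooth_on_sm[OF U1(3)] UU1] .
  have psiJ: "\<psi> ` U \<subseteq> J" unfolding U_def by auto
  have sh: "sm J h" using smooth_on_sm[OF J(2)] .
  define c where "c = (\<lambda>t. \<psi> t ^ n *\<^sub>R (1::real,0::real) + \<psi> t ^ (n+1) *\<^sub>R (0,1) + h (\<psi> t))"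
  have ceq: "c t = (\<lambda>t. (t ^ n, t ^ (n+1)) + h t) (\<psi> t)" for t unfolding c_def by simp
  note p1 = vz_pow[OF oU U0 spsi U1(2), of n]
  note p2 = vz_pow[OF oU U0 spsi U1(2), of "n+1"]
  have s1: "sm U (\<lambda>t. \<psi> t ^ n *\<^sub>R (1::real,0::real))"
    using sm_linear[OF oU bounded_linear_scaleR_left] p1 by blast
  have s2: "sm U (\<lambda>t. \<psi> t ^ (n+1) *\<^sub>R (0::real,1::real))"
    using sm_linear[OF oU bounded_linear_scaleR_left] p2 by blast
  have s3: "sm U (\<lambda>t. h (\<psi> t))" by (rule sm_comp[OF oU oJ sh spsi psiJ])
  have s12: "sm U (\<lambda>t. \<psi> t ^ n *\<^sub>R (1::real,0::real) + \<psi> t ^ (n+1) *\<^sub>R (0,1))"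
    by (rule sm_add[OF oU s1 s2])
  have sc: "sm U c" unfolding c_def by (rule sm_add[OF oU s12 s3])
  have vh: "vz (n+3) h" unfolding vz_def using J(3) by auto
  have v3: "vz (n+3) (\<lambda>t. h (\<psi> t))" by (rule vz_comp[OF oU oJ U0 spsi psiJ U1(2) sh vh])
  have v1: "vz n (\<lambda>t. \<psi> t ^ n *\<^sub>R (1::real,0::real))"
    using vz_linear[OF oU U0 bounded_linear_scaleR_left] p1 by blast
  have v2': "vz (n+1) (\<lambda>t. \<psi> t ^ (n+1) *\<^sub>R (0::real,1::real))"
    using vz_linear[OF oU U0 bounded_linear_scaleR_left] p2 by blast
  have v2: "vz n (\<lambda>t. \<psi> t ^ (n+1) *\<^sub>R (0::real,1::real))" by (rule vz_mono[OF v2']) simp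
  have v3': "vz n (\<lambda>t. h (\<psi> t))" by (rule vz_mono[OF v3]) simp
  have vc: "vz n c" unfolding c_def
    by (rule vz_add[OF oU U0 s12 s3 vz_add[OF oU U0 s1 s2 v1 v2] v3'])
  have nd: "nderiv j c 0 = nderiv j (\<lambda>t. \<psi> t ^ n) 0 *\<^sub>R (1,0) + nderiv j (\<lambda>t. \<psi> t ^ (n+1)) 0 *\<^sub>R (0,1)
     + nderiv j (\<lambda>t. h (\<psi> t)) 0" for j
  proof -
    have l1: "nderiv j (\<lambda>t. \<psi> t ^ n *\<^sub>R (1::real,0::real)) 0 = nderiv j (\<lambda>t. \<psi> t ^ n) 0 *\<^sub>R (1,0)"
      by (rule nderiv_linear[OF oU bounded_linear_scaleR_left _ U0]) (use p1 in blast)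
    have l2: "nderiv j (\<lambda>t. \<psi> t ^ (n+1) *\<^sub>R (0::real,1::real)) 0 = nderiv j (\<lambda>t. \<psi> t ^ (n+1)) 0 *\<^sub>R (0,1)"
      by (rule nderiv_linear[OF oU bounded_linear_scaleR_left _ U0]) (use p2 in blast)
    show ?thesis unfolding c_def nderiv_add[OF oU s12 s3 U0] nderiv_add[OF oU s1 s2 U0] l1 l2 ..
  qed
  define a where "a = d1 \<psi> 0"
  have cn: "nderiv n c 0 = (fact n * a ^ n, 0)"
    using nd[of n] p1 p2 v3 unfolding vz_def a_def by simp
  obtain X where cn1: "nderiv (n+1) c 0 = (X, fact (n+1) * a ^ (n+1))"
    using nd[of "n+1"] p2 v3 unfolding vz_def a_def by simp
  have a0: "a \<noteq> 0" unfolding a_def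
  proof (rule inverse_deriv_nonzero[OF oU1 U1(1,2) smooth_on_sm[OF U1(3)]])
    have "0 \<in> V1" using U1(1,2,5) by force
    then show "g1 differentiable (at 0)" using smooth_on_diff[OF U1(4)] by blast
  qed (rule U1(6))
  have tU: "t \<in> W" "\<gamma> t \<in> U2" if "t \<in> U" for t using that unfolding U_def by auto
  have ct: "c t = \<Psi> (\<gamma> t)" if "t \<in> U" for t using W(3) tU(1)[OF that] ceq[of t] by simp
  have cV2: "c ` U \<subseteq> V2"
  proof
    fix y assume "y \<in> c ` U"
    then obtain t where t: "t \<in> U" "y = c t" by blast
    then show "y \<in> V2" using ct[OF t(1)] tU(2)[OF t(1)] U2(4) by blast
  qed
  have geq: "\<gamma> t = G (c t)" if "t \<in> U" for t
    using ct[OF that] tU(2)[OF that] U2(5) by simp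
  have "vz (Suc (n - 1)) c" using vc assms(1) by simp
  then have m: "vz (n - 1) (d1 c)" by (simp add: vz_Suc)
  have key: "nderiv k \<gamma> 0 = fst (nderiv k c 0) *\<^sub>R P1 G (c 0) + snd (nderiv k c 0) *\<^sub>R P2 G (c 0)"
    if "1 \<le> k" "k \<le> n + 1" for k
  proof -
    have "nderiv k \<gamma> 0 = nderiv k (\<lambda>t. G (c t)) 0"
      by (rule nderiv_local[OF oU _ U0]) (simp add: geq)
    also have "\<dots> = fst (nderiv k c 0) *\<^sub>R P1 G (c 0) + snd (nderiv k c 0) *\<^sub>R P2 G (c 0)"
      by (rule chain_vz[OF oU oV2 U0 sc cV2 U2(3) m that(1)]) (use that assms(1) in simp)
    finally show ?thesis .
  qed
  have part1: "\<forall>k\<in>{1..n-1}. nderiv k \<gamma> 0 = 0"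
  proof
    fix k assume k: "k \<in> {1..n-1}"
    then have "nderiv k c 0 = 0" using vc unfolding vz_def by auto
    then show "nderiv k \<gamma> 0 = 0" using key[of k] k by auto
  qed
  have c0: "c 0 = \<Psi> (\<gamma> 0)" using W ceq by simp
  have dG: "det2 (P1 G (c 0)) (P2 G (c 0)) \<noteq> 0" unfolding c0
    by (rule inverse_det_nonzero[OF oU2 U2(1) smooth_on_diff[OF U2(2) U2(1)] smooth_on_diff[OF U2(3)] U2(5)])
       (use U2 in auto)
  have "det2 (nderiv n \<gamma> 0) (nderiv (n+1) \<gamma> 0) =
        (fact n * a ^ n * (fact (n+1) * a ^ (n+1)) - 0 * X) * det2 (P1 G (c 0)) (P2 G (c 0))"
  proof -
    have e1: "nderiv n \<gamma> 0 = (fact n * a ^ n) *\<^sub>R P1 G (c 0) + 0 *\<^sub>R P2 G (c 0)"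
      using key[of n] assms(1) cn by simp
    have e2: "nderiv (n+1) \<gamma> 0 = X *\<^sub>R P1 G (c 0) + (fact (n+1) * a ^ (n+1)) *\<^sub>R P2 G (c 0)"
      using key[of "n+1"] cn1 by simp
    show ?thesis by (simp only: e1 e2 det2_comb)
  qed
  then have "det2 (nderiv n \<gamma> 0) (nderiv (n+1) \<gamma> 0) \<noteq> 0" using dG a0 by simp
  then show ?thesis using part1 by blast
qed

lemma sm_inverse: "sm {x::real. x \<noteq> 0} (\<lambda>x. inverse x)"
proof -
  let ?S = "{x::real. x \<noteq> 0}"
  have oS: "open ?S" using open_Compl[OF closed_singleton[of "0::real"]] by (simp add: Compl_eq)
  have hv: "((\<lambda>x. inverse x) has_vector_derivative (- (inverse x * inverse x))) (at x)" if "x \<in> ?S" for x :: real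
    using DERIV_inverse[of x UNIV] that unfolding has_real_derivative_iff_has_vector_derivative
    by (simp add: power2_eq_square)
  have "Ck k ?S (\<lambda>x. inverse x)" for k
  proof (induction k)
    case 0 then show ?case by simp
  next
    case (Suc k)
    have cc: "Ck k ?S (\<lambda>x. - (inverse x *\<^sub>R inverse x))"
      using Ck_linear[OF oS bounded_linear_minus[OF bounded_linear_ident] Ck_scaleR[OF oS Suc.IH Suc.IH]] by simp
    have eq: "d1 (\<lambda>x. inverse x) y = - (inverse y *\<^sub>R inverse y)" if "y \<in> ?S" for y :: real
      using d1_eq[OF hv[OF that]] by simp
    have "Ck k ?S (d1 (\<lambda>x. inverse x))"
      by (rule Ck_local[OF oS _ cc]) (simp add: eq)
    moreover have "\<forall>x\<in>?S. (\<lambda>x. inverse x) differentiable (at x)" using hv differentiableI_vector by blast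
    ultimately show ?case by (simp add: Ck_Suc)
  qed
  then show ?thesis unfolding sm_def by blast
qed

lemma open_nonzero: "open {x::real. x \<noteq> 0}"
  using open_Compl[OF closed_singleton[of "0::real"]] by (simp add: Compl_eq)

lemma inv_smooth:
  fixes \<phi> :: "real \<Rightarrow> real"
  assumes oU: "open U0" and oV: "open V0" and s: "sm U0 \<phi>" and nz: "\<forall>t\<in>U0. d1 \<phi> t \<noteq> 0"
    and im: "\<phi> ` U0 = V0" and inj: "inj_on \<phi> U0"
  shows "sm V0 (the_inv_into U0 \<phi>)"
proof -
  define \<psi> where "\<psi> = the_inv_into U0 \<phi>"
  have pf: "\<psi> (\<phi> x) = x" if "x \<in> U0" for x by (simp add: \<psi>_def the_inv_into_f_f[OF inj that])
  have fp: "\<phi> (\<psi> y) = y" if "y \<in> V0" for y unfolding \<psi>_def using f_the_inv_into_f[OF inj] that im by blast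
  have pU: "\<psi> y \<in> U0" if "y \<in> V0" for y unfolding \<psi>_def using the_inv_into_into[OF inj] that im by blast
  have pim: "\<psi> ` V0 \<subseteq> U0" using pU by blast
  have der: "(\<psi> has_vector_derivative inverse (d1 \<phi> (\<psi> y))) (at y)" if y: "y \<in> V0" for y
  proof -
    define x where "x = \<psi> y"
    have x: "x \<in> U0" "\<phi> x = y" unfolding x_def using pU fp y by auto
    obtain \<delta> where \<delta>: "\<delta> > 0" "cball x \<delta> \<subseteq> U0" using oU x(1) open_contains_cball by blast
    have "isCont \<psi> (\<phi> x)"
    proof (rule isCont_inverse_function[where f=\<phi> and g=\<psi> and x=x, OF \<delta>(1)])
      fix z assume "\<bar>z - x\<bar> \<le> \<delta>"
      then have z: "z \<in> U0" using \<delta>(2) by (auto simp: dist_real_def abs_minus_commute)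
      show "\<psi> (\<phi> z) = z" using pf[OF z] .
      show "isCont \<phi> z" using sm_diff0[OF s z] differentiable_imp_continuous_within by blast
    qed
    then have ic: "isCont \<psi> y" using x by simp
    obtain \<epsilon> where \<epsilon>: "\<epsilon> > 0" "ball y \<epsilon> \<subseteq> V0" using oV y open_contains_ball by blast
    have d: "DERIV \<phi> (\<psi> y) :> d1 \<phi> (\<psi> y)"
      using d1_works[OF sm_diff0[OF s pU[OF y]]] unfolding has_real_derivative_iff_has_vector_derivative .
    have "DERIV \<psi> y :> inverse (d1 \<phi> (\<psi> y))"
    proof (rule DERIV_inverse_function[where f=\<phi> and g=\<psi> and x=y, OF d nz[rule_format, OF pU[OF y]], of "y - \<epsilon>" "y + \<epsilon>"])
      fix z assume "y - \<epsilon> < z" "z < y + \<epsilon>"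
      then have "z \<in> V0" using \<epsilon>(2) by (auto simp: dist_real_def)
      then show "\<phi> (\<psi> z) = z" by (rule fp)
    qed (use \<epsilon> ic in auto)
    then show ?thesis unfolding has_real_derivative_iff_has_vector_derivative .
  qed
  define g where "g = (\<lambda>t. inverse (d1 \<phi> t))"
  have sg: "sm U0 g" unfolding g_def
    by (rule sm_comp[OF oU open_nonzero sm_inverse sm_d1[OF s]]) (use nz in auto)
  have "Ck k V0 \<psi>" for k
  proof (induction k)
    case 0 then show ?case by simp
  next
    case (Suc k)
    have cc: "Ck k V0 (\<lambda>y. g (\<psi> y))"
      by (rule Ck_comp[OF oV oU _ Suc.IH pim]) (use sg in \<open>simp add: sm_def\<close>)
    have eq: "d1 \<psi> y = g (\<psi> y)" if "y \<in> V0" for y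
      using d1_eq[OF der[OF that]] by (simp add: g_def)
    have "Ck k V0 (d1 \<psi>)"
      by (rule Ck_local[OF oV _ cc]) (simp add: eq)
    moreover have "\<forall>x\<in>V0. \<psi> differentiable (at x)" using der differentiableI_vector by blast
    ultimately show ?case by (simp add: Ck_Suc)
  qed
  then show ?thesis unfolding sm_def \<psi>_def by blast
qed

lemma affine_dderivs:
  fixes L :: "real \<times> real \<Rightarrow> real \<times> real"
  assumes "bounded_linear L"
  shows "dderivs (v # vs) (\<lambda>x. L x + c) = (\<lambda>_. if vs = [] then L v else 0)"
proof (induction vs arbitrary: v)
  case Nil
  have "((\<lambda>x. L x + c) has_derivative L) (at x)" for x
    using bounded_linear_imp_has_derivative[OF assms] by (auto intro: has_derivative_add_const)
  then have "frechet_derivative (\<lambda>x. L x + c) (at x) = L" for x using frechet_derivative_at by metis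
  then show ?case by simp
next
  case (Cons w vs)
  have "frechet_derivative (\<lambda>_. K) (at x) = (\<lambda>_. 0)" for x and K :: "real \<times> real"
    using frechet_derivative_at[OF has_derivative_const] by metis
  then show ?case using Cons by simp
qed

lemma affine_smooth:
  fixes L :: "real \<times> real \<Rightarrow> real \<times> real"
  assumes "bounded_linear L"
  shows "smooth_on UNIV (\<lambda>x. L x + c)"
  unfolding smooth_on_def
proof (intro conjI allI ballI open_UNIV)
  fix vs and x :: "real \<times> real"
  show "dderivs vs (\<lambda>x. L x + c) differentiable (at x)"
  proof (cases vs)
    case Nil
    then show ?thesis using bounded_linear_imp_has_derivative[OF assms]
      by (auto intro!: differentiableI has_derivative_add_const)
  next
    case (Cons v vs')
    then show ?thesis using affine_dderivs[OF assms] by simp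
  qed
qed

lemma cramer:
  assumes "det2 A B \<noteq> 0"
  shows "x = (det2 x B / det2 A B) *\<^sub>R A + (det2 A x / det2 A B) *\<^sub>R B"
proof -
  have e: "det2 A B *\<^sub>R x = det2 x B *\<^sub>R A + det2 A x *\<^sub>R B"
    by (cases x; cases A; cases B) (simp add: det2_def algebra_simps)
  have "x = inverse (det2 A B) *\<^sub>R (det2 A B *\<^sub>R x)" using assms by simp
  also have "\<dots> = (det2 x B / det2 A B) *\<^sub>R A + (det2 A x / det2 A B) *\<^sub>R B"
    unfolding e by (simp add: scaleR_add_right divide_inverse mult.commute)
  finally show ?thesis .
qed

lemma poly_identity:
  fixes t d e k F P :: real and m :: nat
  shows "(t + d * t^2 + e * t^3) * F - (t * P + real (Suc m) * d * (t^2 * P) + (k + real m * d^2 + e) * (t^3 * P))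
    = (k * d + real m * d * e) * (t^4 * P) + k * e * (t^5 * P)
      + (t + d * t^2 + e * t^3) * (F - (P + real m * d * (t * P) + k * (t^2 * P)))"
  by (simp add: algebra_simps power2_eq_square power3_eq_cube power4_eq_xxxx numeral_eq_Suc)

definition phi :: "real \<Rightarrow> real \<Rightarrow> real \<Rightarrow> real" where
  "phi d e t = t + d * t^2 + e * t^3"
definition kap :: "real \<Rightarrow> real \<Rightarrow> nat \<Rightarrow> real" where
  "kap d e m = real (m choose 2) * d^2 + real m * e"
definition Em :: "real \<Rightarrow> real \<Rightarrow> nat \<Rightarrow> real \<Rightarrow> real" where
  "Em d e m t = phi d e t ^ m - (t^m + real m * d * t^(m+1) + kap d e m * t^(m+2))"

lemma sm_cpow: "sm UNIV (\<lambda>t::real. c * t^m)"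
  using sm_linear[OF open_UNIV bounded_linear_mult_right sm_power] by blast

lemma vz_cpow: "k \<le> m \<Longrightarrow> vz k (\<lambda>t::real. c * t^m)"
  unfolding vz_def
proof (intro allI impI)
  fix j assume "k \<le> m" "j < k"
  have "nderiv j (\<lambda>t::real. c * t^m) 0 = c * nderiv j (\<lambda>t. t^m) 0"
    by (rule nderiv_linear[OF open_UNIV bounded_linear_mult_right sm_power UNIV_I])
  then show "nderiv j (\<lambda>t::real. c * t^m) 0 = 0" using \<open>k \<le> m\<close> \<open>j < k\<close> by (simp add: nderiv_power0)
qed

lemma sm_id: "sm UNIV (\<lambda>t::real. t)"
  by (rule sm_local[OF open_UNIV _ sm_power[of UNIV 1]]) simp

lemma sm_phi: "sm UNIV (phi d e)"
proof -
  have "sm UNIV (\<lambda>t. (t + d * t^2) + e * t^3)"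
    by (intro sm_add[OF open_UNIV] sm_id sm_cpow)
  then show ?thesis unfolding phi_def[abs_def] by simp
qed

lemma vz_phi: "vz 1 (phi d e)"
  by (simp add: vz_Suc phi_def)

lemma kap_Suc: "kap d e (Suc m) = kap d e m + real m * d^2 + e"
proof -
  have "Suc m choose 2 = (m choose 2) + m" by (simp add: numeral_2_eq_2)
  then show ?thesis by (simp add: kap_def algebra_simps)
qed

lemma Em_Suc: "Em d e (Suc m) t = (kap d e m * d + real m * d * e) * t^(m+4) + kap d e m * e * t^(m+5)
      + phi d e t * Em d e m t"
proof -
  have "Em d e (Suc m) t = phi d e t * (phi d e t ^ m) - (t * t^m + real (Suc m) * d * (t^2 * t^m)
      + (kap d e m + real m * d^2 + e) * (t^3 * t^m))"
    unfolding Em_def kap_Suc by (simp add: power_add power2_eq_square power3_eq_cube algebra_simps)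
  also have "\<dots> = (kap d e m * d + real m * d * e) * (t^4 * t^m) + kap d e m * e * (t^5 * t^m)
      + phi d e t * (phi d e t ^ m - (t^m + real m * d * (t * t^m) + kap d e m * (t^2 * t^m)))"
    unfolding phi_def by (rule poly_identity)
  also have "\<dots> = (kap d e m * d + real m * d * e) * t^(m+4) + kap d e m * e * t^(m+5)
      + phi d e t * Em d e m t"
    unfolding Em_def by (simp add: power_add power2_eq_square power3_eq_cube algebra_simps)
  finally show ?thesis .
qed

lemma Em_props: "sm UNIV (Em d e m) \<and> vz (m+3) (Em d e m)"
proof (induction m)
  case 0
  have "Em d e 0 = (\<lambda>t. 0)" by (simp add: Em_def kap_def fun_eq_iff)
  moreover have "vz 3 (\<lambda>t::real. 0::real)" unfolding vz_def
    by (auto simp: nderiv_const elim: less_SucE) (metis nderiv_0 nderiv_const not0_implies_Suc)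
  ultimately show ?case using sm_const by simp
next
  case (Suc m)
  let ?f1 = "\<lambda>t. (kap d e m * d + real m * d * e) * t^(m+4)"
  let ?f2 = "\<lambda>t. kap d e m * e * t^(m+5)"
  let ?f3 = "\<lambda>t. phi d e t * Em d e m t"
  have eq: "Em d e (Suc m) = (\<lambda>t. ?f1 t + ?f2 t + ?f3 t)" using Em_Suc by (simp add: fun_eq_iff)
  have s3: "sm UNIV ?f3" using sm_mult[OF open_UNIV sm_phi] Suc by blast
  have s12: "sm UNIV (\<lambda>t. ?f1 t + ?f2 t)" by (intro sm_add[OF open_UNIV] sm_cpow)
  have v3: "vz (1 + (m+3)) ?f3" using vz_scaleR(1)[OF open_UNIV UNIV_I sm_phi _ vz_phi, of "Em d e m" "m+3"] Suc by simp
  have v12: "vz (Suc m + 3) (\<lambda>t. ?f1 t + ?f2 t)"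
    by (intro vz_add[OF open_UNIV UNIV_I] sm_cpow vz_cpow) auto
  have "sm UNIV (\<lambda>t. ?f1 t + ?f2 t + ?f3 t) \<and> vz (Suc m + 3) (\<lambda>t. ?f1 t + ?f2 t + ?f3 t)"
    using sm_add[OF open_UNIV s12 s3] vz_add[OF open_UNIV UNIV_I s12 s3 v12] v3 by simp
  then show ?case using eq by simp
qed

lemma fac_bound:
  fixes d e r x y :: real
  assumes "0 < r" "r \<le> 1" "3 * (1 + \<bar>d\<bar> + \<bar>e\<bar>) * r \<le> 3/4" "\<bar>x\<bar> \<le> r" "\<bar>y\<bar> \<le> r"
  shows "1/4 \<le> 1 + d*(x+y) + e*(x^2 + x*y + y^2)"
proof -
  have a: "\<bar>x + y\<bar> \<le> 2 * r" using assms by linarith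
  have "\<bar>x\<bar> * \<bar>x\<bar> \<le> r * r" "\<bar>x\<bar> * \<bar>y\<bar> \<le> r * r" "\<bar>y\<bar> * \<bar>y\<bar> \<le> r * r"
    by (intro mult_mono; use assms in auto)+
  moreover have "\<bar>x^2 + x*y + y^2\<bar> \<le> \<bar>x\<bar> * \<bar>x\<bar> + \<bar>x\<bar> * \<bar>y\<bar> + \<bar>y\<bar> * \<bar>y\<bar>"
    using abs_triangle_ineq[of "x*x + x*y" "y*y"] abs_triangle_ineq[of "x*x" "x*y"]
    by (simp add: power2_eq_square abs_mult)
  ultimately have "\<bar>x^2 + x*y + y^2\<bar> \<le> 3 * (r * r)" by linarith
  also have "\<dots> \<le> 3 * r" using assms by (simp add: mult_left_le_one_le)
  finally have b: "\<bar>x^2 + x*y + y^2\<bar> \<le> 3 * r" .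
  have "\<bar>d*(x+y)\<bar> \<le> \<bar>d\<bar> * (2*r)" unfolding abs_mult using a by (simp add: mult_left_mono)
  moreover have "\<bar>e*(x^2 + x*y + y^2)\<bar> \<le> \<bar>e\<bar> * (3*r)" unfolding abs_mult using b by (simp add: mult_left_mono)
  moreover have "\<bar>d\<bar> * (2*r) \<le> \<bar>d\<bar> * (3*r)" using assms(1) by (simp add: mult_left_mono)
  moreover have "\<bar>d\<bar> * (3*r) + \<bar>e\<bar> * (3*r) \<le> 3/4"
  proof -
    have "\<bar>d\<bar> * (3*r) + \<bar>e\<bar> * (3*r) = 3 * (1 + \<bar>d\<bar> + \<bar>e\<bar>) * r - 3 * r" by (simp add: algebra_simps)
    then show ?thesis using assms(1,3) by linarith
  qed
  moreover have "- \<bar>d*(x+y)\<bar> \<le> d*(x+y)" "- \<bar>e*(x^2 + x*y + y^2)\<bar> \<le> e*(x^2 + x*y + y^2)" by auto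
  ultimately show ?thesis by linarith
qed

lemma phi_diff: "phi d e y - phi d e x = (y - x) * (1 + d*(x+y) + e*(x^2 + x*y + y^2))"
  unfolding phi_def by (simp add: power2_eq_square power3_eq_cube algebra_simps)

lemma phi_deriv: "d1 (phi d e) t = 1 + d*(t+t) + e*(t^2 + t*t + t^2)"
proof -
  have "(phi d e has_real_derivative 1 + d*(2*t) + e*(3*t^2)) (at t)"
    unfolding phi_def[abs_def] by (auto intro!: derivative_eq_intros simp: power2_eq_square)
  then show ?thesis unfolding has_real_derivative_iff_has_vector_derivative
    by (auto dest!: d1_eq simp: power2_eq_square algebra_simps)
qed

lemma phi_bound:
  assumes "\<bar>t\<bar> \<le> 1"
  shows "\<bar>phi d e t\<bar> \<le> \<bar>t\<bar> * (1 + \<bar>d\<bar> + \<bar>e\<bar>)"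
proof -
  have t1: "\<bar>t\<bar> * \<bar>t\<bar> \<le> \<bar>t\<bar>" by (rule mult_left_le_one_le) (use assms in auto)
  have t2: "\<bar>t\<bar> * \<bar>t\<bar> \<le> 1" using t1 assms by linarith
  have "(\<bar>t\<bar> * \<bar>t\<bar>) * \<bar>t\<bar> \<le> \<bar>t\<bar>" by (rule mult_left_le_one_le) (use t2 in auto)
  then have "\<bar>t\<bar> * \<bar>t\<bar> \<le> \<bar>t\<bar>" "\<bar>t\<bar> * \<bar>t\<bar> * \<bar>t\<bar> \<le> \<bar>t\<bar>" using t1 by auto
  then have "\<bar>d\<bar> * (\<bar>t\<bar> * \<bar>t\<bar>) \<le> \<bar>d\<bar> * \<bar>t\<bar>" "\<bar>e\<bar> * (\<bar>t\<bar> * \<bar>t\<bar> * \<bar>t\<bar>) \<le> \<bar>e\<bar> * \<bar>t\<bar>"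
    by (auto intro: mult_left_mono)
  moreover have "\<bar>phi d e t\<bar> \<le> \<bar>t\<bar> + \<bar>d\<bar> * (\<bar>t\<bar> * \<bar>t\<bar>) + \<bar>e\<bar> * (\<bar>t\<bar> * \<bar>t\<bar> * \<bar>t\<bar>)"
    unfolding phi_def
    using abs_triangle_ineq[of "t + d * t^2" "e * t^3"] abs_triangle_ineq[of t "d * t^2"]
    by (simp add: power2_eq_square power3_eq_cube abs_mult)
  ultimately show ?thesis by (simp add: algebra_simps)
qed

lemma phi_inverse:
  fixes d e \<epsilon> :: real
  assumes "\<epsilon> > 0"
  obtains r V0 where "r > 0" "\<forall>t\<in>ball 0 r. phi d e t \<in> ball 0 \<epsilon>" "open V0"
    "phi d e ` ball 0 r = V0" "inj_on (phi d e) (ball 0 r)" "\<forall>t\<in>ball 0 r. d1 (phi d e) t \<noteq> 0"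
proof -
  define K where "K = 1 + \<bar>d\<bar> + \<bar>e\<bar>"
  have K1: "K \<ge> 1" unfolding K_def by simp
  define r where "r = min (\<epsilon> / (2*K)) (1 / (4*K))"
  have r0: "r > 0" unfolding r_def using K1 assms by simp
  have rK: "r * K \<le> 1/4" unfolding r_def using K1
    by (simp add: min_def divide_simps)
  have rK2: "r * K \<le> \<epsilon>/2" unfolding r_def using K1 assms
    by (simp add: min_def divide_simps)
  have "r \<le> 1 / (4*K)" unfolding r_def by simp
  moreover have "1 / (4*K) \<le> 1" using K1 by (simp add: divide_simps)
  ultimately have r1: "r \<le> 1" by linarith
  have c3: "3 * (1 + \<bar>d\<bar> + \<bar>e\<bar>) * r \<le> 3/4" using rK unfolding K_def by (simp add: algebra_simps)
  have mono: "phi d e x < phi d e y" if "\<bar>x\<bar> \<le> r" "\<bar>y\<bar> \<le> r" "x < y" for x y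
  proof -
    have "1/4 \<le> 1 + d*(x+y) + e*(x^2 + x*y + y^2)" by (rule fac_bound[OF r0 r1 c3 that(1,2)])
    then have "0 < (y - x) * (1 + d*(x+y) + e*(x^2 + x*y + y^2))" using that(3) by simp
    then show ?thesis using phi_diff[of d e y x] by simp
  qed
  have inb: "\<bar>t\<bar> < r" if "t \<in> ball 0 r" for t :: real using that by (simp add: dist_real_def)
  have A: "\<forall>t\<in>ball 0 r. phi d e t \<in> ball 0 \<epsilon>"
  proof
    fix t :: real assume "t \<in> ball 0 r"
    then have t: "\<bar>t\<bar> < r" by (rule inb)
    have "\<bar>phi d e t\<bar> \<le> \<bar>t\<bar> * K" unfolding K_def by (rule phi_bound) (use t r1 in auto)
    also have "\<dots> \<le> r * K" using t K1 by (simp add: mult_right_mono)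
    finally show "phi d e t \<in> ball 0 \<epsilon>" using rK2 assms by (simp add: dist_real_def)
  qed
  have D: "\<forall>t\<in>ball 0 r. d1 (phi d e) t \<noteq> 0"
  proof
    fix t :: real assume "t \<in> ball 0 r"
    then have t: "\<bar>t\<bar> \<le> r" using inb by fastforce
    have "1/4 \<le> 1 + d*(t+t) + e*(t^2 + t*t + t^2)" by (rule fac_bound[OF r0 r1 c3 t t])
    then show "d1 (phi d e) t \<noteq> 0" unfolding phi_deriv by simp
  qed
  have inj: "inj_on (phi d e) (ball 0 r)"
  proof (rule inj_onI)
    fix x y :: real assume "x \<in> ball 0 r" "y \<in> ball 0 r" "phi d e x = phi d e y"
    then have "\<bar>x\<bar> \<le> r" "\<bar>y\<bar> \<le> r" using inb by fastforce+
    show "x = y"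
    proof (rule ccontr)
      assume "x \<noteq> y"
      then have "x < y \<or> y < x" by linarith
      then show False using mono[of x y] mono[of y x] \<open>\<bar>x\<bar> \<le> r\<close> \<open>\<bar>y\<bar> \<le> r\<close> \<open>phi d e x = phi d e y\<close> by auto
    qed
  qed
  define V0 where "V0 = {phi d e (-r) <..< phi d e r}"
  have im: "phi d e ` ball 0 r = V0"
  proof
    show "phi d e ` ball 0 r \<subseteq> V0"
    proof
      fix z assume "z \<in> phi d e ` ball 0 r"
      then obtain t where t: "t \<in> ball 0 r" "z = phi d e t" by blast
      then have "\<bar>t\<bar> < r" using inb by blast
      then show "z \<in> V0" unfolding V0_def using mono[of "-r" t] mono[of t r] t r0 by auto
    qed
    show "V0 \<subseteq> phi d e ` ball 0 r"
    proof
      fix z assume z: "z \<in> V0"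
      have cont: "continuous_on {-r..r} (phi d e)" unfolding phi_def[abs_def]
        by (intro continuous_intros)
      obtain t where t: "-r \<le> t" "t \<le> r" "phi d e t = z"
        using IVT'[of "phi d e" "-r" z r, OF _ _ _ cont] z r0 unfolding V0_def by auto
      have "t \<noteq> -r" "t \<noteq> r" using t z unfolding V0_def by auto
      then have "t \<in> ball 0 r" using t by (auto simp: dist_real_def)
      then show "z \<in> phi d e ` ball 0 r" using t by blast
    qed
  qed
  show ?thesis using that[OF r0 A _ im inj D] unfolding V0_def by simp
qed

lemma nderiv_mono_vec: "nderiv j (\<lambda>s::real. s^k *\<^sub>R V) 0 = (if j = k then fact k else 0) *\<^sub>R V"
proof -
  have "nderiv j (\<lambda>s::real. s^k *\<^sub>R V) 0 = nderiv j (\<lambda>s::real. s^k) 0 *\<^sub>R V"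
    by (rule nderiv_linear[OF open_UNIV bounded_linear_scaleR_left sm_power UNIV_I])
  then show ?thesis by (simp add: nderiv_power0)
qed

lemma sm_mono_vec: "sm UNIV (\<lambda>s::real. s^k *\<^sub>R V)"
  using sm_linear[OF open_UNIV bounded_linear_scaleR_left sm_power] by blast

lemma nderiv_const0: "nderiv j (\<lambda>_. c) x = (if j = 0 then c else 0)"
  by (cases j) (simp_all add: nderiv_const)

lemma det2_scale: "det2 (a *\<^sub>R u) (b *\<^sub>R v) = a * b * det2 u v"
  by (simp add: det2_def algebra_simps)

lemma vec_id:
  fixes A B C :: "'a::real_vector"
  shows "(q0 + N*d*q1 + k0*q2 + E0) *\<^sub>R A + (q1 + N1*d*q2 + k1*q3 + E1) *\<^sub>R B + (q2 + N2*d*q3 + k2*q4 + E2) *\<^sub>R C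
     = q0 *\<^sub>R A + q1 *\<^sub>R ((N*d) *\<^sub>R A + B) + q2 *\<^sub>R (k0 *\<^sub>R A + (N1*d) *\<^sub>R B + C)
       + (E0 *\<^sub>R A + (k1*q3 + E1) *\<^sub>R B + (N2*d*q3 + k2*q4 + E2) *\<^sub>R C)"
  by (simp add: algebra_simps scaleR_add_left scaleR_add_right)

lemma phi_pow: "phi d e t ^ m = t^m + real m * d * t^(m+1) + kap d e m * t^(m+2) + Em d e m t"
  unfolding Em_def by simp

lemma forward_dir:
  fixes n :: nat and I :: "real set" and \<gamma> :: "real \<Rightarrow> real \<times> real"
  assumes n2: "n \<ge> 2" and sg: "smooth_on I \<gamma>" and I0: "0 \<in> I"
    and h1: "\<forall>k\<in>{1..n-1}. nderiv k \<gamma> 0 = 0" and h2: "det2 (nderiv n \<gamma> 0) (nderiv (n+1) \<gamma> 0) \<noteq> 0"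
  shows "\<exists>J h. 0 \<in> J \<and> smooth_on J h \<and> (\<forall>k\<le>n+2. nderiv k h 0 = 0) \<and>
            A_equiv_at0 \<gamma> (\<lambda>t. (t ^ n, t ^ (n+1)) + h t)"
proof -
  have oI: "open I" using sg smooth_on_def by blast
  have sgm: "sm I \<gamma>" using smooth_on_sm[OF sg] .
  define \<gamma>0 where "\<gamma>0 = \<gamma> 0"
  define A where "A = inverse (fact n) *\<^sub>R nderiv n \<gamma> 0"
  define B where "B = inverse (fact (n+1)) *\<^sub>R nderiv (n+1) \<gamma> 0"
  define C where "C = inverse (fact (n+2)) *\<^sub>R nderiv (n+2) \<gamma> 0"
  have hAB: "det2 A B \<noteq> 0" unfolding A_def B_def det2_scale using h2 by simp
  define \<alpha> where "\<alpha> = det2 C B / det2 A B"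
  define \<beta> where "\<beta> = det2 A C / det2 A B"
  have hC: "C = \<alpha> *\<^sub>R A + \<beta> *\<^sub>R B" unfolding \<alpha>_def \<beta>_def by (rule cramer[OF hAB])
  define d where "d = - \<beta> / real (n+1)"
  define e where "e = (- \<alpha> - real (n choose 2) * d^2) / real n"
  have hk: "kap d e n = - \<alpha>" unfolding kap_def e_def using n2 by (simp add: field_simps)
  have hd: "real (n+1) * d = - \<beta>" unfolding d_def by (simp add: field_simps)
  have Z: "kap d e n *\<^sub>R A + (real (n+1) * d) *\<^sub>R B + C = 0"
    unfolding hk hd hC by simp
  define B' where "B' = (real n * d) *\<^sub>R A + B"
  define \<delta> where "\<delta> = det2 A B'"
  have h\<delta>: "\<delta> = det2 A B" unfolding \<delta>_def B'_def by (simp add: det2_def algebra_simps)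
  have \<delta>0: "\<delta> \<noteq> 0" using hAB h\<delta> by simp
  define L where "L = (\<lambda>x. (det2 x B' / \<delta>, det2 A x / \<delta>))"
  have lL: "linear L" unfolding L_def
    by (rule linearI) (simp_all add: det2_def add_divide_distrib diff_divide_distrib algebra_simps)
  have bL: "bounded_linear L" using lL linear_conv_bounded_linear by blast
  have LA: "L A = (1, 0)" unfolding L_def using \<delta>0 by (simp add: \<delta>_def det2_def)
  have LB: "L B' = (0, 1)" unfolding L_def using \<delta>0 by (simp add: \<delta>_def det2_def)
  define M where "M = (\<lambda>y::real\<times>real. fst y *\<^sub>R A + snd y *\<^sub>R B')"
  have lM: "linear M" unfolding M_def by (rule linearI) (simp_all add: algebra_simps)
  have bM: "bounded_linear M" using lM linear_conv_bounded_linear by blast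
  have hLM: "L (M y) = y" for y
    unfolding M_def using LA LB by (simp add: linear_add[OF lL] linear_scale[OF lL])
  have hML: "M (L x) = x" for x
    unfolding M_def L_def using cramer[OF \<delta>0[unfolded \<delta>_def], of x] by (simp add: \<delta>_def)
  define \<Psi> where "\<Psi> = (\<lambda>x. L x + (- L \<gamma>0))"
  define \<Psi>i where "\<Psi>i = (\<lambda>y. M y + \<gamma>0)"
  have \<Psi>1: "\<Psi>i (\<Psi> x) = x" for x
    unfolding \<Psi>_def \<Psi>i_def using hML[of "x - \<gamma>0"] by (simp add: linear_diff[OF lL] linear_add[OF lM] linear_neg[OF lM])
  have \<Psi>2: "\<Psi> (\<Psi>i y) = y" for y
    unfolding \<Psi>_def \<Psi>i_def using hLM[of y] by (simp add: linear_add[OF lL])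
  have s\<Psi>: "smooth_on UNIV \<Psi>" unfolding \<Psi>_def by (rule affine_smooth[OF bL])
  have s\<Psi>i: "smooth_on UNIV \<Psi>i" unfolding \<Psi>i_def by (rule affine_smooth[OF bM])
  obtain \<epsilon> where \<epsilon>: "\<epsilon> > 0" "ball 0 \<epsilon> \<subseteq> I" using oI I0 open_contains_ball by blast
  obtain r V0 where r: "r > 0" "\<forall>t\<in>ball 0 r. phi d e t \<in> ball 0 \<epsilon>" "open V0"
    "phi d e ` ball 0 r = V0" "inj_on (phi d e) (ball 0 r)" "\<forall>t\<in>ball 0 r. d1 (phi d e) t \<noteq> 0"
    using phi_inverse[OF \<epsilon>(1), of d e] by blast
  define U0 where "U0 = ball (0::real) r"
  define \<phi> where "\<phi> = phi d e"
  have oU0: "open U0" and U00: "0 \<in> U0" unfolding U0_def using r by auto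
  have s\<phi>: "sm U0 \<phi>" unfolding \<phi>_def using sm_subset[OF sm_phi] by blast
  have \<phi>I: "\<phi> ` U0 \<subseteq> I" unfolding \<phi>_def U0_def using r(2) \<epsilon>(2) by blast
  have \<phi>0: "\<phi> 0 = 0" unfolding \<phi>_def phi_def by simp
  define \<psi> where "\<psi> = the_inv_into U0 \<phi>"
  have inj: "inj_on \<phi> U0" using r(5) unfolding \<phi>_def U0_def .
  have im: "\<phi> ` U0 = V0" using r(4) unfolding \<phi>_def U0_def .
  have s\<psi>: "sm V0 \<psi>" unfolding \<psi>_def
    by (rule inv_smooth[OF oU0 r(3) s\<phi> _ im inj]) (use r(6) in \<open>simp add: \<phi>_def U0_def\<close>)
  have pf: "\<psi> (\<phi> x) = x" if "x \<in> U0" for x by (simp add: \<psi>_def the_inv_into_f_f[OF inj that])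
  have fp: "\<phi> (\<psi> y) = y" if "y \<in> V0" for y unfolding \<psi>_def using f_the_inv_into_f[OF inj] that im by blast
  have \<psi>im: "\<psi> ` V0 = U0" unfolding \<psi>_def using the_inv_into_onto[OF inj] im by simp
  have V00: "0 \<in> V0" using im U00 \<phi>0 by force
  have \<psi>0: "\<psi> 0 = 0" using pf[OF U00] \<phi>0 by simp
  define P where "P = (\<lambda>s::real. \<gamma>0 + (s^n *\<^sub>R A + s^(n+1) *\<^sub>R B + s^(n+2) *\<^sub>R C))"
  have sP12: "sm UNIV (\<lambda>s::real. s^n *\<^sub>R A + s^(n+1) *\<^sub>R B)" by (intro sm_add[OF open_UNIV] sm_mono_vec)
  have sP123: "sm UNIV (\<lambda>s::real. s^n *\<^sub>R A + s^(n+1) *\<^sub>R B + s^(n+2) *\<^sub>R C)"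
    by (intro sm_add[OF open_UNIV] sP12 sm_mono_vec)
  have sP: "sm UNIV P" unfolding P_def by (intro sm_add[OF open_UNIV] sm_const sP123)
  have nP: "nderiv j P 0 = (if j = 0 then \<gamma>0 else 0) + ((if j = n then fact n else 0) *\<^sub>R A
      + (if j = n+1 then fact (n+1) else 0) *\<^sub>R B + (if j = n+2 then fact (n+2) else 0) *\<^sub>R C)" for j
    unfolding P_def nderiv_add[OF open_UNIV sm_const sP123 UNIV_I] nderiv_add[OF open_UNIV sP12 sm_mono_vec UNIV_I]
      nderiv_add[OF open_UNIV sm_mono_vec sm_mono_vec UNIV_I] nderiv_mono_vec nderiv_const0 ..
  define R where "R = (\<lambda>s. \<gamma> s - P s)"
  have sR: "sm I R" unfolding R_def by (rule sm_minus[OF oI sgm sm_subset[OF sP]]) simp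
  have vR: "vz (n+3) R" unfolding vz_def
  proof (intro allI impI)
    fix j assume j: "j < n + 3"
    have "nderiv j R 0 = nderiv j \<gamma> 0 - nderiv j P 0"
      unfolding R_def by (rule nderiv_minus[OF oI sgm sm_subset[OF sP] I0]) simp
    also have "\<dots> = 0"
    proof -
      consider "j = 0" | "j \<in> {1..n-1}" | "j = n" | "j = n+1" | "j = n+2" using j n2 by fastforce
      then show ?thesis
      proof cases
        case 1 then show ?thesis using n2 by (simp add: P_def \<gamma>0_def)
      next
        case 2 then show ?thesis using h1 n2 by (auto simp: nP)
      qed (use n2 in \<open>auto simp: nP A_def B_def C_def simp del: fact_Suc\<close>)
    qed
    finally show "nderiv j R 0 = 0" .
  qed
  define R\<phi> where "R\<phi> = (\<lambda>t. R (\<phi> t))"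
  have sR\<phi>: "sm U0 R\<phi>" unfolding R\<phi>_def by (rule sm_comp[OF oU0 oI sR s\<phi> \<phi>I])
  have vR\<phi>: "vz (n+3) R\<phi>" unfolding R\<phi>_def by (rule vz_comp[OF oU0 oI U00 s\<phi> \<phi>I \<phi>0 sR vR])
  define F where "F = (\<lambda>t. Em d e n t *\<^sub>R A + (kap d e (n+1) * t^(n+3) + Em d e (n+1) t) *\<^sub>R B
      + (real (n+2) * d * t^(n+3) + kap d e (n+2) * t^(n+4) + Em d e (n+2) t) *\<^sub>R C)"
  have EA: "sm UNIV (Em d e m) \<and> vz (m+3) (Em d e m)" for m by (rule Em_props)
  have sF1: "sm UNIV (\<lambda>t. Em d e n t *\<^sub>R A)" using sm_linear[OF open_UNIV bounded_linear_scaleR_left] EA by blast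
  have sF2a: "sm UNIV (\<lambda>t. kap d e (n+1) * t^(n+3) + Em d e (n+1) t)" using sm_add[OF open_UNIV sm_cpow] EA by blast
  have sF2: "sm UNIV (\<lambda>t. (kap d e (n+1) * t^(n+3) + Em d e (n+1) t) *\<^sub>R B)"
    using sm_linear[OF open_UNIV bounded_linear_scaleR_left sF2a] by blast
  have sF3a: "sm UNIV (\<lambda>t. real (n+2) * d * t^(n+3) + kap d e (n+2) * t^(n+4))" by (intro sm_add[OF open_UNIV] sm_cpow)
  have sF3b: "sm UNIV (\<lambda>t. real (n+2) * d * t^(n+3) + kap d e (n+2) * t^(n+4) + Em d e (n+2) t)"
    using sm_add[OF open_UNIV sF3a] EA by blast
  have sF3: "sm UNIV (\<lambda>t. (real (n+2) * d * t^(n+3) + kap d e (n+2) * t^(n+4) + Em d e (n+2) t) *\<^sub>R C)"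
    using sm_linear[OF open_UNIV bounded_linear_scaleR_left sF3b] by blast
  have sF12: "sm UNIV (\<lambda>t. Em d e n t *\<^sub>R A + (kap d e (n+1) * t^(n+3) + Em d e (n+1) t) *\<^sub>R B)"
    by (rule sm_add[OF open_UNIV sF1 sF2])
  have sF: "sm UNIV F" unfolding F_def by (rule sm_add[OF open_UNIV sF12 sF3])
  have vF1: "vz (n+3) (\<lambda>t. Em d e n t *\<^sub>R A)"
    using vz_linear[OF open_UNIV UNIV_I bounded_linear_scaleR_left] EA by blast
  have vF2a: "vz (n+3) (\<lambda>t. kap d e (n+1) * t^(n+3) + Em d e (n+1) t)"
  proof -
    have "vz (n+3) (Em d e (n+1))" using EA[of "n+1"] vz_mono[of "n+1+3" "Em d e (n+1)" "n+3"] by auto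
    then show ?thesis using vz_add[OF open_UNIV UNIV_I sm_cpow _ vz_cpow] EA by blast
  qed
  have vF2: "vz (n+3) (\<lambda>t. (kap d e (n+1) * t^(n+3) + Em d e (n+1) t) *\<^sub>R B)"
    using vz_linear[OF open_UNIV UNIV_I bounded_linear_scaleR_left sF2a vF2a] .
  have vF3a: "vz (n+3) (\<lambda>t. real (n+2) * d * t^(n+3) + kap d e (n+2) * t^(n+4))"
    by (intro vz_add[OF open_UNIV UNIV_I] sm_cpow vz_cpow) auto
  have vEn2: "vz (n+3) (Em d e (n+2))" using EA[of "n+2"] vz_mono[of "n+2+3" "Em d e (n+2)" "n+3"] by auto
  have vF3b: "vz (n+3) (\<lambda>t. real (n+2) * d * t^(n+3) + kap d e (n+2) * t^(n+4) + Em d e (n+2) t)"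
    using vz_add[OF open_UNIV UNIV_I sF3a _ vF3a vEn2] EA by blast
  have vF3: "vz (n+3) (\<lambda>t. (real (n+2) * d * t^(n+3) + kap d e (n+2) * t^(n+4) + Em d e (n+2) t) *\<^sub>R C)"
    using vz_linear[OF open_UNIV UNIV_I bounded_linear_scaleR_left sF3b vF3b] .
  have vF: "vz (n+3) F" unfolding F_def
    by (rule vz_add[OF open_UNIV UNIV_I sF12 sF3 vz_add[OF open_UNIV UNIV_I sF1 sF2 vF1 vF2] vF3])
  define h where "h = (\<lambda>t. \<Psi> (\<gamma> (\<phi> t)) - (t ^ n, t ^ (n+1)))"
  have hEq: "h t = L (R\<phi> t + F t)" for t
  proof -
    have e1: "n + 1 + 1 = n + 2" "n + 1 + 2 = n + 3" "n + 2 + 1 = n + 3" "n + 2 + 2 = n + 4" by simp_all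
    have pw0: "\<phi> t ^ n = t^n + real n * d * t^(n+1) + kap d e n * t^(n+2) + Em d e n t"
      unfolding \<phi>_def by (rule phi_pow)
    have pw1: "\<phi> t ^ (n+1) = t^(n+1) + real (n+1) * d * t^(n+2) + kap d e (n+1) * t^(n+3) + Em d e (n+1) t"
      unfolding \<phi>_def using phi_pow[of d e t "n+1"] unfolding e1 .
    have pw2: "\<phi> t ^ (n+2) = t^(n+2) + real (n+2) * d * t^(n+3) + kap d e (n+2) * t^(n+4) + Em d e (n+2) t"
      unfolding \<phi>_def using phi_pow[of d e t "n+2"] unfolding e1 .
    have "P (\<phi> t) = \<gamma>0 + (\<phi> t ^ n *\<^sub>R A + \<phi> t ^ (n+1) *\<^sub>R B + \<phi> t ^ (n+2) *\<^sub>R C)"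
      unfolding P_def ..
    also have "\<dots> = \<gamma>0 + (t^n *\<^sub>R A + t^(n+1) *\<^sub>R B' + t^(n+2) *\<^sub>R (kap d e n *\<^sub>R A + (real (n+1) * d) *\<^sub>R B + C) + F t)"
      unfolding pw0 pw1 pw2 vec_id F_def B'_def ..
    finally have "P (\<phi> t) = \<gamma>0 + (t^n *\<^sub>R A + t^(n+1) *\<^sub>R B' + t^(n+2) *\<^sub>R (kap d e n *\<^sub>R A + (real (n+1) * d) *\<^sub>R B + C) + F t)" .
    then have PE: "P (\<phi> t) = \<gamma>0 + (t^n *\<^sub>R A + t^(n+1) *\<^sub>R B' + F t)" using Z by simp
    have "\<gamma> (\<phi> t) = P (\<phi> t) + R\<phi> t" unfolding R\<phi>_def R_def by simp
    then have "\<Psi> (\<gamma> (\<phi> t)) = L (R\<phi> t + F t) + t^n *\<^sub>R L A + t^(n+1) *\<^sub>R L B'"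
      unfolding \<Psi>_def PE by (simp add: linear_add[OF lL] linear_scale[OF lL] algebra_simps)
    then show ?thesis unfolding h_def LA LB by simp
  qed
  have hfun: "h = (\<lambda>t. L (R\<phi> t + F t))" using hEq by (simp add: fun_eq_iff)
  have sRF: "sm U0 (\<lambda>t. R\<phi> t + F t)" by (rule sm_add[OF oU0 sR\<phi> sm_subset[OF sF]]) simp
  have sh: "sm U0 h" unfolding hfun by (rule sm_linear[OF oU0 bL sRF])
  have vh: "vz (n+3) h" unfolding hfun
    by (rule vz_linear[OF oU0 U00 bL sRF vz_add[OF oU0 U00 sR\<phi> sm_subset[OF sF] vR\<phi> vF]]) simp
  have J1: "\<forall>k\<le>n+2. nderiv k h 0 = 0" using vh unfolding vz_def by auto
  have g2: "(\<lambda>t. (t ^ n, t ^ (n+1)) + h t) = (\<lambda>t. \<Psi> (\<gamma> (\<phi> t)))" unfolding h_def by (simp add: fun_eq_iff)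
  have D1: "diffeo_germ \<psi> 0 0" unfolding diffeo_germ_def
  proof (intro exI conjI)
    show "0 \<in> V0" by (rule V00)
    show "\<psi> 0 = 0" by (rule \<psi>0)
    show "smooth_on V0 \<psi>" by (rule sm_smooth_on[OF r(3) s\<psi>])
    show "smooth_on U0 \<phi>" by (rule sm_smooth_on[OF oU0 s\<phi>])
    show "\<psi> ` V0 = U0" by (rule \<psi>im)
    show "\<forall>x\<in>V0. \<phi> (\<psi> x) = x" using fp by blast
    show "\<forall>y\<in>U0. \<psi> (\<phi> y) = y" using pf by blast
  qed
  have D2: "diffeo_germ \<Psi> (\<gamma> 0) ((\<lambda>t. (t ^ n, t ^ (n+1)) + h t) 0)" unfolding diffeo_germ_def
  proof (intro exI conjI)
    show "\<gamma> 0 \<in> UNIV" by simp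
    show "\<Psi> (\<gamma> 0) = ((0::real) ^ n, (0::real) ^ (n+1)) + h 0" using \<phi>0 unfolding h_def by simp
    show "smooth_on UNIV \<Psi>" by (rule s\<Psi>)
    show "smooth_on UNIV \<Psi>i" by (rule s\<Psi>i)
    show "\<Psi> ` UNIV = UNIV" using \<Psi>2 by (metis surj_def)
    show "\<forall>x\<in>UNIV. \<Psi>i (\<Psi> x) = x" using \<Psi>1 by blast
    show "\<forall>y\<in>UNIV. \<Psi> (\<Psi>i y) = y" using \<Psi>2 by blast
  qed
  have AE: "A_equiv_at0 \<gamma> (\<lambda>t. (t ^ n, t ^ (n+1)) + h t)" unfolding A_equiv_at0_def
  proof (intro exI conjI)
    show "diffeo_germ \<psi> 0 0" by (rule D1)
    show "diffeo_germ \<Psi> (\<gamma> 0) ((\<lambda>t. (t ^ n, t ^ (n+1)) + h t) 0)" by (rule D2)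
    show "open V0" by (rule r(3))
    show "0 \<in> V0" by (rule V00)
    show "\<forall>s\<in>V0. \<Psi> (\<gamma> s) = ((\<lambda>t. (t ^ n, t ^ (n+1)) + h t)) (\<psi> s)"
      using fp unfolding h_def by auto
  qed
  show ?thesis
  proof (intro exI conjI)
    show "0 \<in> U0" by (rule U00)
    show "smooth_on U0 h" by (rule sm_smooth_on[OF oU0 sh])
    show "\<forall>k\<le>n+2. nderiv k h 0 = 0" by (rule J1)
    show "A_equiv_at0 \<gamma> (\<lambda>t. (t ^ n, t ^ (n+1)) + h t)" by (rule AE)
  qed
qed

theorem mainTheorem6:
  fixes n :: nat and I :: "real set" and \<gamma> :: "real \<Rightarrow> real \<times> real"
  assumes "n \<ge> 2" and "is_interval I" and "smooth_on I \<gamma>" and "0 \<in> I"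
  shows "((\<forall>k\<in>{1..n-1}. nderiv k \<gamma> 0 = 0) \<and> det2 (nderiv n \<gamma> 0) (nderiv (n+1) \<gamma> 0) \<noteq> 0)
     \<longleftrightarrow> (\<exists>J h. 0 \<in> J \<and> smooth_on J h \<and> (\<forall>k\<le>n+2. nderiv k h 0 = 0) \<and>
            A_equiv_at0 \<gamma> (\<lambda>t. (t ^ n, t ^ (n+1)) + h t))"
proof
  assume H: "(\<forall>k\<in>{1..n-1}. nderiv k \<gamma> 0 = 0) \<and> det2 (nderiv n \<gamma> 0) (nderiv (n+1) \<gamma> 0) \<noteq> 0"
  show "\<exists>J h. 0 \<in> J \<and> smooth_on J h \<and> (\<forall>k\<le>n+2. nderiv k h 0 = 0) \<and>
            A_equiv_at0 \<gamma> (\<lambda>t. (t ^ n, t ^ (n+1)) + h t)"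
    using forward_dir[OF assms(1,3,4)] H by blast
next
  assume "\<exists>J h. 0 \<in> J \<and> smooth_on J h \<and> (\<forall>k\<le>n+2. nderiv k h 0 = 0) \<and>
            A_equiv_at0 \<gamma> (\<lambda>t. (t ^ n, t ^ (n+1)) + h t)"
  then obtain J h where J: "0 \<in> J" "smooth_on J h" "\<forall>k\<le>n+2. nderiv k h 0 = 0"
    and A: "A_equiv_at0 \<gamma> (\<lambda>t. (t ^ n, t ^ (n+1)) + h t)" by blast
  show "(\<forall>k\<in>{1..n-1}. nderiv k \<gamma> 0 = 0) \<and> det2 (nderiv n \<gamma> 0) (nderiv (n+1) \<gamma> 0) \<noteq> 0"
    by (rule reverse_dir[OF assms(1,3,4) J A])
qed

end
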